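(* Let $N_\pm\subset L$ be primitive sublattices of signature $(1,r_\pm-1)$, and let $\mathcal{Z}_\pm$ be $(N_\pm,\mathrm{Amp}_{\mathcal{Z}_\pm})$-generic families of building blocks. Let $T_\pm=N_\pm^\perp\subset L$ and $W_\pm=T_\mp\cap N_\pm$. Suppose that (i) $R=N_+\cap N_-$ is negative definite; (ii) $N_+$ and $N_-$ intersect orthogonally, i.e. $N_\pm\otimes\mathbb{R}=(R\otimes\mathbb{R})\oplus(W_\pm\otimes\mathbb{R})$; (iii) $(W_\pm\otimes\mathbb{R})\cap\mathrm{Amp}_{\mathcal{Z}_\pm}\neq\emptyset$. Then there exist building blocks $(Z_\pm,S_\pm)\in\mathcal{Z}_\pm$ and $N_\pm$-polarised markings $h_\pm:L\to H^2(S_\pm;\mathbb{Z})$ whose period points are $\langle k_\mp,\pm k_0\rangle$ for an orthonormal triple $(k_+,k_-,k_0)$ of positive classes in $L_{\mathbb{R}}$ with $k_\pm\in\mathrm{Amp}_{\mathcal{Z}_\pm}$; in particular $h_\pm(k_\pm)$ is the restriction to $S_\pm$ of a Kähler class on $Z_\pm$.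
   Context: $L$ is the K3 lattice (even unimodular, signature $(3,19)$), $L_{\mathbb{R}}=L\otimes\mathbb{R}$. A building block is a pair $(Z,S)$ where $Z$ is a nonsingular projective complex 3-fold with a morphism $f:Z\to\mathbb{P}^1$, $S=f^{-1}(\infty)$ a nonsingular K3 surface in $|-K_Z|$, $-K_Z$ primitive, the image of $H^2(Z;\mathbb{Z})\to H^2(S;\mathbb{Z})$ primitive, and $H^3(Z;\mathbb{Z})$ torsion-free. For a primitive $N\subset L$, a marking $h:L\to H^2(S;\mathbb{Z})$ (isometry) of the fibre of a block $(Z,S)$ is $N$-polarised if $h(N)$ is the image of $H^2(Z;\mathbb{Z})\to H^2(S;\mathbb{Z})$. The period point of a marked K3 is the oriented positive 2-plane $h^{-1}(\langle[\mathrm{Re}\,\Omega],[\mathrm{Im}\,\Omega]\rangle)\subset L_{\mathbb{R}}$ for a holomorphic 2-form $\Omega$. The Griffiths domain $D_N$ is the set of oriented positive-definite 2-planes in $N^\perp\otimes\mathbb{R}$, a complex manifold (an open subset of the quadric $\{\Pi\in\mathbb{P}(N^\perp\otimes\mathbb{C}):\Pi^2=0,\ \Pi\cdot\bar\Pi>0\}$). Given an open subcone $\mathrm{Amp}_{\mathcal{Z}}$ of the positive cone of $N\otimes\mathbb{R}$, a family $\mathcal{Z}$ of building blocks is $(N,\mathrm{Amp}_{\mathcal{Z}})$-generic if there is $U_{\mathcal{Z}}\subseteq D_N$ whose complement is a locally finite union of complex analytic submanifolds of positive codimension such that for every $\Pi\in U_{\mathcal{Z}}$ and $k\in\mathrm{Amp}_{\mathcal{Z}}$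 there is $(Z,S)\in\mathcal{Z}$ and an $N$-polarised marking $h$ with period point $\Pi$ and with $h(k)$ the restriction to $S$ of a Kähler class on $Z$. *)

theory Defs
  imports "HOL-Analysis.Analysis"
begin

text \<open>The K3 lattice is modelled as the integer points of real^22, with an integral
symmetric bilinear form given by a Gram matrix B (any even unimodular form of
signature (3,19) is isometric to the K3 lattice).\<close>

type_synonym rvec = "real^22"
type_synonym cvec = "complex^22"

definition bil :: "real^22^22 \<Rightarrow> rvec \<Rightarrow> rvec \<Rightarrow> real" where
  "bil B x y = x \<bullet> (B *v y)"

definition Lint :: "rvec set" where
  "Lint = {x. \<forall>i. x $ i \<in> \<int>}"

definition pos_def_on :: "real^22^22 \<Rightarrow> rvec set \<Rightarrow> bool" where
  "pos_def_on B W \<longleftrightarrow> (\<forall>x\<in>W. x \<noteq> 0 \<longrightarrow> bil B x x > 0)"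

definition neg_def_on :: "real^22^22 \<Rightarrow> rvec set \<Rightarrow> bool" where
  "neg_def_on B W \<longleftrightarrow> (\<forall>x\<in>W. x \<noteq> 0 \<longrightarrow> bil B x x < 0)"

definition form_signature :: "real^22^22 \<Rightarrow> rvec set \<Rightarrow> nat \<Rightarrow> nat \<Rightarrow> bool" where
  "form_signature B V p q \<longleftrightarrow>
     subspace V \<and> dim V = p + q \<and>
     (\<forall>x\<in>V. (\<forall>y\<in>V. bil B x y = 0) \<longrightarrow> x = 0) \<and>
     (\<exists>W. subspace W \<and> W \<subseteq> V \<and> dim W = p \<and> pos_def_on B W) \<and>
     (\<forall>W. subspace W \<and> W \<subseteq> V \<and> pos_def_on B W \<longrightarrow> dim W \<le> p) \<and>
     (\<exists>W. subspace W \<and> W \<subseteq> V \<and> dim W = q \<and> neg_def_on B W) \<and>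
     (\<forall>W. subspace W \<and> W \<subseteq> V \<and> neg_def_on B W \<longrightarrow> dim W \<le> q)"

definition K3_form :: "real^22^22 \<Rightarrow> bool" where
  "K3_form B \<longleftrightarrow> (\<forall>i j. B $ i $ j \<in> \<int>) \<and> transpose B = B \<and>
     (\<forall>x\<in>Lint. \<exists>m::int. bil B x x = 2 * of_int m) \<and>
     \<bar>det B\<bar> = 1 \<and> form_signature B UNIV 3 19"

definition sublattice :: "rvec set \<Rightarrow> bool" where
  "sublattice N \<longleftrightarrow> N \<subseteq> Lint \<and> 0 \<in> N \<and> (\<forall>x\<in>N. \<forall>y\<in>N. x + y \<in> N) \<and> (\<forall>x\<in>N. - x \<in> N)"

definition primitive_sublattice :: "rvec set \<Rightarrow> bool" where
  "primitive_sublattice N \<longleftrightarrow> sublattice N \<and> (\<forall>x\<in>Lint. x \<in> span N \<longrightarrow> x \<in> N)"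

definition orth_compl :: "real^22^22 \<Rightarrow> rvec set \<Rightarrow> rvec set" where
  "orth_compl B N = {x\<in>Lint. \<forall>y\<in>N. bil B x y = 0}"

definition cof :: "rvec \<Rightarrow> cvec" where
  "cof x = (\<chi> i. complex_of_real (x $ i))"

definition cscale :: "complex \<Rightarrow> cvec \<Rightarrow> cvec" where
  "cscale c u = (\<chi> i. c * u $ i)"

definition cconj :: "cvec \<Rightarrow> cvec" where
  "cconj u = (\<chi> i. cnj (u $ i))"

definition bilC :: "real^22^22 \<Rightarrow> cvec \<Rightarrow> cvec \<Rightarrow> complex" where
  "bilC B u v = (\<Sum>i\<in>UNIV. \<Sum>j\<in>UNIV. u $ i * complex_of_real (B $ i $ j) * v $ j)"

text \<open>The complex line through a vector, i.e. a point of the projective space.\<close>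
definition cline :: "cvec \<Rightarrow> cvec set" where
  "cline w = range (\<lambda>c. cscale c w)"

text \<open>Affine cone over D_N: nonzero w in N^perp \<otimes> C with w.w = 0, w.conj w > 0.
  The oriented positive 2-plane <a,b> corresponds to the line of a + i b.\<close>
definition period_cone :: "real^22^22 \<Rightarrow> rvec set \<Rightarrow> cvec set" where
  "period_cone B N = {w. w \<noteq> 0 \<and>
      (\<exists>a b. a \<in> span (orth_compl B N) \<and> b \<in> span (orth_compl B N) \<and>
             w = cof a + cscale \<i> (cof b)) \<and>
      bilC B w w = 0 \<and> Re (bilC B w (cconj w)) > 0}"

definition griffiths_domain :: "real^22^22 \<Rightarrow> rvec set \<Rightarrow> cvec set set" where
  "griffiths_domain B N = cline ` period_cone B N"

definition clinear :: "(cvec \<Rightarrow> cvec) \<Rightarrow> bool" where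
  "clinear L \<longleftrightarrow> linear L \<and> (\<forall>c v. L (cscale c v) = cscale c (L v))"

definition csubmanifold :: "cvec set \<Rightarrow> nat \<Rightarrow> bool" where
  "csubmanifold M d \<longleftrightarrow> d \<le> 22 \<and> (\<forall>p\<in>M. \<exists>U F D.
     open U \<and> p \<in> U \<and>
     (\<forall>z\<in>U. (F has_derivative D z) (at z) \<and> clinear (D z) \<and>
              dim (range (D z)) = 2 * (22 - d)) \<and>
     M \<inter> U = {z\<in>U. F z = (0::cvec)})"

text \<open>A complex analytic submanifold of D_N of positive codimension (given by its set of
  points = lines; its affine cone minus the origin is a complex submanifold of
  dimension less than that of the cone over D_N, namely rank(N^perp) - 1).\<close>
definition analytic_subm_poscodim :: "real^22^22 \<Rightarrow> rvec set \<Rightarrow> cvec set set \<Rightarrow> bool" where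
  "analytic_subm_poscodim B N S \<longleftrightarrow> S \<subseteq> griffiths_domain B N \<and>
     (\<exists>d. csubmanifold (\<Union>S - {0}) d \<and> d < dim (span (orth_compl B N)) - 1)"

definition locally_finite_in_D :: "real^22^22 \<Rightarrow> rvec set \<Rightarrow> cvec set set set \<Rightarrow> bool" where
  "locally_finite_in_D B N F \<longleftrightarrow>
     (\<forall>w\<in>period_cone B N. \<exists>V. open V \<and> w \<in> V \<and> finite {S\<in>F. \<Union>S \<inter> V \<noteq> {}})"

definition amp_cone :: "real^22^22 \<Rightarrow> rvec set \<Rightarrow> rvec set \<Rightarrow> bool" where
  "amp_cone B N Amp \<longleftrightarrow> Amp \<subseteq> span N \<and> openin (top_of_set (span N)) Amp \<and>
     (\<forall>x\<in>Amp. \<forall>t::real. t > 0 \<longrightarrow> t *\<^sub>R x \<in> Amp) \<and>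
     (\<exists>C\<in>components {x\<in>span N. bil B x x > 0}. Amp \<subseteq> C)"

text \<open>A family of building blocks is abstracted by its realisation relation:
  Real P k  means: there is (Z,S) in the family and an N-polarised marking h of S
  with period point P such that h(k) is the restriction of a Kaehler class on Z.\<close>
definition generic_family ::
  "real^22^22 \<Rightarrow> rvec set \<Rightarrow> rvec set \<Rightarrow> (cvec set \<Rightarrow> rvec \<Rightarrow> bool) \<Rightarrow> bool" where
  "generic_family B N Amp Real \<longleftrightarrow>
     (\<exists>U F. U \<subseteq> griffiths_domain B N \<and>
        griffiths_domain B N - U = \<Union>F \<and>
        locally_finite_in_D B N F \<and>
        (\<forall>S\<in>F. analytic_subm_poscodim B N S) \<and>
        (\<forall>P\<in>U. \<forall>k\<in>Amp. Real P k))"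

end

theory Submission
  imports Defs
begin


lemma bil_add_left: "bil B (x + y) z = bil B x z + bil B y z"
  by (simp add: bil_def inner_add_left)
lemma bil_add_right: "bil B z (x + y) = bil B z x + bil B z y"
  by (simp add: bil_def matrix_vector_right_distrib inner_add_right)
lemma bil_scale_left: "bil B (c *\<^sub>R x) z = c * bil B x z"
  by (simp add: bil_def)
lemma bil_scale_right: "bil B z (c *\<^sub>R x) = c * bil B z x"
  by (simp add: bil_def matrix_vector_mult_scaleR)
lemma bil_diff_left: "bil B (x - y) z = bil B x z - bil B y z"
  by (simp add: bil_def inner_diff_left)
lemma bil_diff_right: "bil B z (x - y) = bil B z x - bil B z y"
  by (simp add: bil_def matrix_vector_mult_diff_distrib inner_diff_right)
lemma bil_minus_left: "bil B (- x) z = - bil B x z"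
  by (simp add: bil_def)
lemma bil_minus_right: "bil B z (- x) = - bil B z x"
  using bil_scale_right[of B z "-1" x] by simp
lemma bil_zero_left[simp]: "bil B 0 z = 0" by (simp add: bil_def)
lemma bil_zero_right[simp]: "bil B z 0 = 0" by (simp add: bil_def)

lemmas bil_simps = bil_add_left bil_add_right bil_scale_left bil_scale_right
  bil_diff_left bil_diff_right bil_minus_left bil_minus_right

lemma bil_sym: assumes "transpose B = B" shows "bil B x y = bil B y x"
proof -
  have "bil B x y = (x v* B) \<bullet> y" by (simp add: bil_def dot_lmul_matrix)
  also have "x v* B = transpose B *v x" by simp
  finally show ?thesis using assms by (simp add: bil_def inner_commute)
qed

lemma linear_bil_right: "linear (bil B x)"
  by (rule linearI) (simp_all add: bil_simps)
lemma linear_bil_left: "linear (\<lambda>x. bil B x y)"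
  by (rule linearI) (simp_all add: bil_simps)

lemma bounded_bilinear_bil: "bounded_bilinear (bil B)"
proof -
  have "bounded_bilinear (\<lambda>x y. x \<bullet> (B *v y))"
    using bounded_bilinear.comp[OF bounded_bilinear_inner bounded_linear_ident matrix_vector_mul_bounded_linear[of B]]
    by simp
  then show ?thesis unfolding bil_def[abs_def] .
qed



lemma bil_span_orth:
  assumes "\<forall>x\<in>S. \<forall>y\<in>T. bil B x y = 0" "x \<in> span S" "y \<in> span T"
  shows "bil B x y = 0"
proof -
  have sub1: "subspace {x. bil B x y = 0}" for y
    by (auto simp: subspace_def bil_simps)
  have sub2: "subspace {y. bil B x y = 0}" for x
    by (auto simp: subspace_def bil_simps)
  have "\<forall>y\<in>T. bil B x y = 0"
  proof
    fix y assume "y \<in> T"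
    show "bil B x y = 0"
      using span_induct[OF assms(2) sub1[of y]] assms(1) \<open>y\<in>T\<close> by auto
  qed
  then show ?thesis using span_induct[OF assms(3) sub2[of x]] by auto
qed

lemma cof_nth[simp]: "cof x $ i = complex_of_real (x $ i)"
  by (simp add: cof_def)
lemma cscale_nth[simp]: "cscale c u $ i = c * u $ i"
  by (simp add: cscale_def)
lemma cconj_nth[simp]: "cconj u $ i = cnj (u $ i)"
  by (simp add: cconj_def)

lemma cof_add: "cof (x + y) = cof x + cof y" by (simp add: vec_eq_iff)
lemma cof_scale: "cof (r *\<^sub>R x) = r *\<^sub>R cof x" by (simp add: vec_eq_iff complex_eq_iff)
lemma cof_minus: "cof (- x) = - cof x" by (simp add: vec_eq_iff)
lemma cof_diff: "cof (x - y) = cof x - cof y" by (simp add: vec_eq_iff)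
lemma cof_0[simp]: "cof 0 = 0" by (simp add: vec_eq_iff)
lemma linear_cof: "linear cof" by (rule linearI) (simp_all add: cof_add cof_scale)
lemma bounded_linear_cof: "bounded_linear cof"
  using linear_cof linear_conv_bounded_linear by blast
lemma inj_cof: "inj cof"
  by (auto simp: inj_def vec_eq_iff)

lemma cscale_add: "cscale c (u + v) = cscale c u + cscale c v"
  by (simp add: vec_eq_iff algebra_simps)
lemma cscale_add_left: "cscale (c + d) u = cscale c u + cscale d u"
  by (simp add: vec_eq_iff algebra_simps)
lemma cscale_scaleR: "cscale c (r *\<^sub>R u) = r *\<^sub>R cscale c u"
  by (simp add: vec_eq_iff complex_eq_iff)
lemma cscale_cscale: "cscale c (cscale d u) = cscale (c * d) u"
  by (simp add: vec_eq_iff)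
lemma cscale_one[simp]: "cscale 1 u = u"
  by (simp add: vec_eq_iff)
lemma cscale_zero[simp]: "cscale 0 u = 0" "cscale c 0 = 0"
  by (simp_all add: vec_eq_iff)
lemma cscale_of_real: "cscale (complex_of_real r) u = r *\<^sub>R u"
  by (simp add: vec_eq_iff complex_eq_iff)
lemma cscale_minus: "cscale c (- u) = - cscale c u"
  by (simp add: vec_eq_iff)
lemma cscale_diff: "cscale c (u - v) = cscale c u - cscale c v"
  by (simp add: vec_eq_iff algebra_simps)
lemma cscale_decomp: "cscale c u = Re c *\<^sub>R u + Im c *\<^sub>R cscale \<i> u"
proof -
  have "c = complex_of_real (Re c) + complex_of_real (Im c) * \<i>"
    by (simp add: complex_eq_iff)
  then have "cscale c u = cscale (complex_of_real (Re c)) u + cscale (complex_of_real (Im c) * \<i>) u"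
    by (metis cscale_add_left)
  then show ?thesis by (simp add: cscale_of_real flip: cscale_cscale)
qed
lemma cscale_eq_0: "c \<noteq> 0 \<Longrightarrow> cscale c u = 0 \<longleftrightarrow> u = 0"
  by (simp add: vec_eq_iff)
lemma linear_cscale: "linear (cscale c)"
  by (rule linearI) (simp_all add: cscale_add cscale_scaleR)
lemma bounded_linear_cscale: "bounded_linear (cscale c)"
  using linear_cscale linear_conv_bounded_linear by blast

lemma bil_expand: "bil B x y = (\<Sum>i\<in>UNIV. \<Sum>j\<in>UNIV. x $ i * B $ i $ j * y $ j)"
  by (simp add: bil_def inner_vec_def matrix_vector_mult_def sum_distrib_left mult.assoc)

lemma bilC_cof: "bilC B (cof x) (cof y) = complex_of_real (bil B x y)"
  by (simp add: bilC_def bil_expand)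

lemma bilC_add_left: "bilC B (u + v) w = bilC B u w + bilC B v w"
  by (simp add: bilC_def algebra_simps sum.distrib)
lemma bilC_add_right: "bilC B w (u + v) = bilC B w u + bilC B w v"
  by (simp add: bilC_def algebra_simps sum.distrib)
lemma bilC_cscale_left: "bilC B (cscale c u) w = c * bilC B u w"
  by (simp add: bilC_def sum_distrib_left mult.assoc)
lemma bilC_cscale_right: "bilC B w (cscale c u) = c * bilC B w u"
  by (simp add: bilC_def sum_distrib_left algebra_simps)

lemma cconj_w: "cconj (cof a + cscale \<i> (cof b)) = cof a + cscale (- \<i>) (cof b)"
  by (simp add: vec_eq_iff)

lemma period_cone_memI:
  assumes sym: "transpose B = B"
    and a: "a \<in> span (orth_compl B N)" and b: "b \<in> span (orth_compl B N)"
    and aa: "bil B a a = bil B b b" "bil B a a > 0" and ab: "bil B a b = 0"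
  shows "cof a + cscale \<i> (cof b) \<in> period_cone B N"
proof -
  let ?w = "cof a + cscale \<i> (cof b)"
  have ba: "bil B b a = 0" using ab bil_sym[OF sym] by metis
  have 1: "bilC B ?w ?w = 0"
    by (simp add: bilC_add_left bilC_add_right bilC_cscale_left bilC_cscale_right bilC_cof aa ab ba)
  have 2: "bilC B ?w (cconj ?w) = complex_of_real (2 * bil B a a)"
    unfolding cconj_w
    by (simp add: bilC_add_left bilC_add_right bilC_cscale_left bilC_cscale_right bilC_cof aa ab ba)
  have 3: "Re (bilC B ?w (cconj ?w)) > 0" using 2 aa by simp
  have "?w \<noteq> 0"
  proof
    assume "?w = 0"
    then have "bilC B ?w (cconj ?w) = 0" by (simp add: bilC_def)
    then show False using 3 by simp
  qed
  then show ?thesis unfolding period_cone_def using 1 3 a b by blast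
qed



lemma dim_UNIV_cvec: "dim (UNIV :: cvec set) = 44"
  by (simp add: dim_UNIV DIM_cart)

lemma dim_ker_range:
  fixes f :: "cvec \<Rightarrow> cvec"
  assumes "linear f"
  shows "dim {x. f x = 0} + dim (range f) \<le> 44"
proof -
  let ?K = "{x. f x = 0}"
  have sK: "subspace ?K" using assms by (auto simp: subspace_def linear_add linear_scale linear_0)
  let ?P = "{y \<in> UNIV. \<forall>x \<in> ?K. orthogonal x y}"
  have d: "dim ?P + dim ?K = dim (UNIV :: cvec set)"
    by (rule dim_subspace_orthogonal_to_vectors) (use sK in auto)
  have "range f \<subseteq> f ` ?P"
  proof
    fix z assume "z \<in> range f"
    then obtain x where x: "z = f x" by auto
    obtain y w where "x = y + w" "y \<in> span ?K" and orth: "\<And>v. v \<in> span ?K \<Longrightarrow> orthogonal w v"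
      using orthogonal_subspace_decomp_exists[of ?K x] by blast
    have spK: "span ?K = ?K" using sK by (simp add: span_eq_iff)
    have "y \<in> ?K" using \<open>y \<in> span ?K\<close> spK by simp
    then have "f x = f w" using \<open>x = y + w\<close> assms by (simp add: linear_add)
    moreover have "w \<in> ?P"
    proof -
      have "orthogonal v w" if "v \<in> ?K" for v
        using orth[of v] that spK orthogonal_commute by auto
      then show ?thesis by simp
    qed
    ultimately show "z \<in> f ` ?P" using x by auto
  qed
  then have "dim (range f) \<le> dim (f ` ?P)" by (rule dim_subset)
  also have "\<dots> \<le> dim ?P" using assms by (rule dim_image_le)
  finally show ?thesis using d dim_UNIV_cvec by linarith
qed

lemma dim_hyper_ge:
  fixes f :: "rvec \<Rightarrow> real"
  assumes "subspace S" "linear f"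
  shows "dim S \<le> dim (S \<inter> {x. f x = 0}) + 1"
proof (cases "\<exists>s\<in>S. f s \<noteq> 0")
  case False
  then have "S \<inter> {x. f x = 0} = S" by auto
  then show ?thesis by simp
next
  case True
  then obtain s where s: "s \<in> S" "f s \<noteq> 0" by auto
  let ?T = "S \<inter> {x. f x = 0}"
  have "S \<subseteq> span (insert s ?T)"
  proof
    fix x assume x: "x \<in> S"
    let ?y = "x - (f x / f s) *\<^sub>R s"
    have "f ?y = 0" using assms(2) s by (simp add: linear_diff linear_scale)
    moreover have "?y \<in> S" using x s assms(1) by (simp add: subspace_diff subspace_scale)
    ultimately have "?y \<in> span (insert s ?T)" by (simp add: span_base)
    moreover have "(f x / f s) *\<^sub>R s \<in> span (insert s ?T)" by (simp add: span_base span_scale)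
    ultimately have "?y + (f x / f s) *\<^sub>R s \<in> span (insert s ?T)" by (rule span_add)
    then show "x \<in> span (insert s ?T)" by simp
  qed
  then have "dim S \<le> dim (insert s ?T)"
    using dim_subset[OF \<open>S \<subseteq> span (insert s ?T)\<close>] by simp
  also have "\<dots> \<le> dim ?T + 1" by (simp add: dim_insert)
  finally show ?thesis .
qed

lemma cof_ri_eq:
  assumes "cof x1 + cscale \<i> (cof y1) = cof x2 + cscale \<i> (cof y2)"
  shows "x1 = x2 \<and> y1 = y2"
proof -
  have "\<And>i. complex_of_real (x1$i) + \<i> * complex_of_real (y1$i) = complex_of_real (x2$i) + \<i> * complex_of_real (y2$i)"
    using assms by (simp add: vec_eq_iff)
  then have "\<And>i. x1$i = x2$i \<and> y1$i = y2$i" by (simp add: complex_eq_iff)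
  then show ?thesis by (simp add: vec_eq_iff)
qed

lemma cof_ri_zero:
  assumes "cof x = cscale \<i> (cof y)" shows "x = 0 \<and> y = 0"
  using cof_ri_eq[of x 0 0 y] assms by simp



lemma ker_count:
  fixes D :: "cvec \<Rightarrow> cvec"
  assumes sW: "subspace W" and sQ: "subspace Q" and WQ: "W \<inter> Q = {0}"
    and a: "a \<in> W" and b: "b \<in> Q" and aa: "bil B a a \<noteq> 0"
    and D: "clinear D"
    and DW: "\<And>v. v \<in> W \<Longrightarrow> bil B a v = 0 \<Longrightarrow> D (cof v) = 0"
    and DQ: "\<And>u. u \<in> Q \<Longrightarrow> bil B b u = 0 \<Longrightarrow> D (cof u) = 0"
    and Dw: "D (cof a + cscale \<i> (cof (l *\<^sub>R b))) = 0"
  shows "2 * (dim W + dim Q) \<le> dim {x. D x = 0} + 2"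
proof -
  have lD: "linear D" and cD: "\<And>c v. D (cscale c v) = cscale c (D v)" using D by (auto simp: clinear_def)
  let ?K = "{x. D x = 0}"
  have sK: "subspace ?K" using lD by (auto simp: subspace_def linear_add linear_scale linear_0)
  let ?EW = "W \<inter> {v. bil B a v = 0}" and ?EQ = "Q \<inter> {v. bil B b v = 0}"
  have sEW: "subspace ?EW" using sW by (auto simp: subspace_def bil_simps)
  have sEQ: "subspace ?EQ" using sQ by (auto simp: subspace_def bil_simps)
  define E where "E = {x + y |x y. x \<in> ?EW \<and> y \<in> ?EQ}"
  have sE: "subspace E" unfolding E_def by (rule subspace_sums[OF sEW sEQ])
  have "dim E + dim (?EW \<inter> ?EQ) = dim ?EW + dim ?EQ"
    unfolding E_def by (rule dim_sums_Int[OF sEW sEQ])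
  moreover have "?EW \<inter> ?EQ = {0}"
  proof
    show "?EW \<inter> ?EQ \<subseteq> {0}" using WQ by blast
    show "{0} \<subseteq> ?EW \<inter> ?EQ" using subspace_0[OF sEW] subspace_0[OF sEQ] by blast
  qed
  ultimately have dE: "dim E = dim ?EW + dim ?EQ" by simp
  have hW: "dim W \<le> dim ?EW + 1" using dim_hyper_ge[OF sW linear_bil_right[of B a]] by simp
  have hQ: "dim Q \<le> dim ?EQ + 1" using dim_hyper_ge[OF sQ linear_bil_right[of B b]] by simp
  have aE: False if aEh: "a - t *\<^sub>R b \<in> E" for t
  proof -
    obtain v u where vu: "a - t *\<^sub>R b = v + u" "v \<in> ?EW" "u \<in> ?EQ" using aEh unfolding E_def by blast
    have "a - v = u + t *\<^sub>R b" using vu(1) by (simp add: algebra_simps)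
    moreover have "a - v \<in> W" using a vu(2) sW subspace_diff by blast
    moreover have "u + t *\<^sub>R b \<in> Q" using vu(3) b sQ by (simp add: subspace_add subspace_scale)
    ultimately have "a - v \<in> W \<inter> Q" by simp
    then have "a = v" using WQ by auto
    then show False using vu(2) aa by auto
  qed
  let ?C1 = "cof ` E" and ?C2 = "(\<lambda>y. cscale \<i> (cof y)) ` E"
  have lin2: "linear (\<lambda>y. cscale \<i> (cof y))"
    using linear_compose[OF linear_cof linear_cscale] by (simp add: o_def)
  have sC1: "subspace ?C1" by (rule linear_subspace_image[OF linear_cof sE])
  have sC2: "subspace ?C2" by (rule linear_subspace_image[OF lin2 sE])
  have dC1: "dim ?C1 = dim E"
    by (rule dim_image_eq[OF linear_cof]) (use inj_cof in \<open>auto simp: inj_on_def inj_def\<close>)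
  have inj2: "inj (\<lambda>y. cscale \<i> (cof y))"
  proof (rule injI)
    fix x y assume "cscale \<i> (cof x) = cscale \<i> (cof y)"
    then have "cscale (- \<i>) (cscale \<i> (cof x)) = cscale (- \<i>) (cscale \<i> (cof y))" by simp
    then have "cof x = cof y" by (simp add: cscale_cscale)
    then show "x = y" using inj_cof by (simp add: inj_def)
  qed
  have dC2: "dim ?C2 = dim E"
    by (rule dim_image_eq[OF lin2]) (use inj2 in \<open>auto simp: inj_on_def inj_def\<close>)
  have C12: "?C1 \<inter> ?C2 = {0}"
  proof -
    have "z = 0" if zC: "z \<in> ?C1" "z \<in> ?C2" for z
    proof -
      from zC(1) obtain x where "z = cof x" by blast
      moreover from zC(2) obtain y where "z = cscale \<i> (cof y)" by blast
      ultimately show ?thesis using cof_ri_zero[of x y] by simp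
    qed
    moreover have "0 \<in> ?C1 \<inter> ?C2" using sE subspace_0 by (auto intro!: image_eqI[of 0])
    ultimately show ?thesis by blast
  qed
  define S where "S = {p + q |p q. p \<in> ?C1 \<and> q \<in> ?C2}"
  have sS: "subspace S" unfolding S_def by (rule subspace_sums[OF sC1 sC2])
  have spS: "span S = S" using sS by (simp add: span_eq_iff)
  have "dim S + dim (?C1 \<inter> ?C2) = dim ?C1 + dim ?C2"
    unfolding S_def by (rule dim_sums_Int[OF sC1 sC2])
  then have dS: "dim S = 2 * dim E" using C12 dC1 dC2 by simp
  have Smem: "z \<in> S \<longleftrightarrow> (\<exists>x y. x \<in> E \<and> y \<in> E \<and> z = cof x + cscale \<i> (cof y))" for z
    unfolding S_def by blast
  have EK: "D (cof x) = 0" if xE: "x \<in> E" for x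
  proof -
    obtain v u where "x = v + u" "v \<in> ?EW" "u \<in> ?EQ" using xE unfolding E_def by blast
    then show ?thesis using DW DQ lD by (simp add: cof_add linear_add)
  qed
  have SK: "S \<subseteq> ?K"
  proof
    fix z assume "z \<in> S"
    then obtain x y where "x \<in> E" "y \<in> E" "z = cof x + cscale \<i> (cof y)" using Smem by auto
    then show "z \<in> ?K" using EK lD cD by (simp add: linear_add)
  qed
  let ?w = "cof a + cscale \<i> (cof (l *\<^sub>R b))"
  let ?iw = "cscale \<i> ?w"
  have iw_eq: "?iw = cof (- (l *\<^sub>R b)) + cscale \<i> (cof a)"
    by (simp add: vec_eq_iff complex_eq_iff algebra_simps)
  have w_nS: "?w \<notin> span S"
  proof
    assume "?w \<in> span S"
    then have "?w \<in> S" using spS by simp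
    then obtain x y where "x \<in> E" "y \<in> E" "?w = cof x + cscale \<i> (cof y)" using Smem by auto
    then have "a = x" using cof_ri_eq[of a "l *\<^sub>R b" x y] by simp
    then show False using aE[of 0] \<open>x \<in> E\<close> by simp
  qed
  have iw_nS: "?iw \<notin> span (insert ?w S)"
  proof
    assume "?iw \<in> span (insert ?w S)"
    then obtain k where "?iw - k *\<^sub>R ?w \<in> span S" by (auto simp: span_insert)
    then have "?iw - k *\<^sub>R ?w \<in> S" using spS by simp
    then obtain x y where xy: "x \<in> E" "y \<in> E" "?iw - k *\<^sub>R ?w = cof x + cscale \<i> (cof y)" using Smem by auto
    have "?iw - k *\<^sub>R ?w = cof (- (l *\<^sub>R b) - k *\<^sub>R a) + cscale \<i> (cof (a - (k * l) *\<^sub>R b))"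
      by (simp add: vec_eq_iff complex_eq_iff algebra_simps)
    then have "a - (k * l) *\<^sub>R b = y" using xy(3) cof_ri_eq[of "- (l *\<^sub>R b) - k *\<^sub>R a" "a - (k * l) *\<^sub>R b" x y] by simp
    then show False using aE xy(2) by blast
  qed
  have dim2: "dim (insert ?iw (insert ?w S)) = dim S + 2"
    using w_nS iw_nS by (simp add: dim_insert)
  have wK: "?w \<in> ?K" using Dw by simp
  have iwK: "?iw \<in> ?K" using Dw cD by simp
  have "insert ?iw (insert ?w S) \<subseteq> ?K" using SK wK iwK by auto
  then have "dim (insert ?iw (insert ?w S)) \<le> dim ?K" by (rule dim_subset)
  then have "dim S + 2 \<le> dim ?K" using dim2 by simp
  moreover have "dim W + dim Q \<le> dim E + 2" using dE hW hQ by linarith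
  ultimately show ?thesis using dS by presburger
qed



definition lam :: "real^22^22 \<Rightarrow> rvec \<Rightarrow> rvec \<Rightarrow> real" where
  "lam B a b = sqrt (bil B a a / bil B b b)"

definition Phi :: "real^22^22 \<Rightarrow> complex \<Rightarrow> rvec \<Rightarrow> rvec \<Rightarrow> cvec" where
  "Phi B c a b = cscale c (cof a + cscale \<i> (cof (lam B a b *\<^sub>R b)))"

lemma curve_deriv:
  fixes X Y P :: cvec
  assumes "(g has_real_derivative g0) (at 0)" "(f has_real_derivative f0) (at 0)"
  shows "((\<lambda>t. P + g t *\<^sub>R X + f t *\<^sub>R Y) has_derivative (\<lambda>t. t *\<^sub>R (g0 *\<^sub>R X + f0 *\<^sub>R Y))) (at 0)"
  using assms unfolding has_field_derivative_def
  by (auto intro!: derivative_eq_intros simp: algebra_simps)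

lemma deriv_zero_curve:
  fixes \<gamma> :: "real \<Rightarrow> cvec" and F :: "cvec \<Rightarrow> cvec"
  assumes g: "(\<gamma> has_derivative (\<lambda>t. t *\<^sub>R Z)) (at 0)"
    and F: "(F has_derivative D) (at (\<gamma> 0))" and lD: "linear D"
    and ev: "eventually (\<lambda>t. F (\<gamma> t) = 0) (nhds 0)"
  shows "D Z = 0"
proof -
  have h1: "((\<lambda>t. F (\<gamma> t)) has_derivative (\<lambda>t. D (t *\<^sub>R Z))) (at 0)"
    using has_derivative_compose[OF g F] .
  have F0: "F (\<gamma> 0) = 0" using ev eventually_nhds_x_imp_x by blast
  have ev': "eventually (\<lambda>t. (\<lambda>t. 0::cvec) t = F (\<gamma> t)) (at 0 within UNIV)"
    using ev by (simp add: eventually_at_filter eventually_mono)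
  have h2: "((\<lambda>t. F (\<gamma> t)) has_derivative (\<lambda>t. 0)) (at 0)"
    using has_derivative_transform_eventually[OF has_derivative_const ev'] F0 by simp
  have "(\<lambda>t. D (t *\<^sub>R Z)) = (\<lambda>t. 0)" using has_derivative_unique[OF h1 h2] .
  then have "D (1 *\<^sub>R Z) = 0" by meson
  then show ?thesis by simp
qed

lemma Phi_c: "Phi B (c + complex_of_real t) a b = Phi B c a b + t *\<^sub>R Phi B 1 a b"
  unfolding Phi_def by (simp add: cscale_add_left cscale_of_real)

lemma Phi_v:
  assumes sym: "transpose B = B" and av: "bil B a v = 0"
  shows "Phi B c (a + t *\<^sub>R v) b = cscale c (cof a + cscale \<i> (cof (0 *\<^sub>R b))) + t *\<^sub>R cscale c (cof v)
     + sqrt ((bil B a a + t^2 * bil B v v) / bil B b b) *\<^sub>R cscale c (cscale \<i> (cof b))"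
proof -
  have va: "bil B v a = 0" using av bil_sym[OF sym] by metis
  have "lam B (a + t *\<^sub>R v) b = sqrt ((bil B a a + t^2 * bil B v v) / bil B b b)"
    unfolding lam_def by (simp add: bil_simps av va power2_eq_square)
  then show ?thesis unfolding Phi_def
    by (simp add: cof_add cof_scale cscale_add cscale_scaleR)
qed

lemma Phi_u:
  assumes sym: "transpose B = B" and bu: "bil B b u = 0"
  shows "Phi B c a (b + t *\<^sub>R u) = cscale c (cof a)
     + sqrt (bil B a a / (bil B b b + t^2 * bil B u u)) *\<^sub>R cscale c (cscale \<i> (cof b))
     + (t * sqrt (bil B a a / (bil B b b + t^2 * bil B u u))) *\<^sub>R cscale c (cscale \<i> (cof u))"
proof -
  have ub: "bil B u b = 0" using bu bil_sym[OF sym] by metis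
  have "lam B a (b + t *\<^sub>R u) = sqrt (bil B a a / (bil B b b + t^2 * bil B u u))"
    unfolding lam_def by (simp add: bil_simps bu ub power2_eq_square)
  then show ?thesis unfolding Phi_def
    by (simp add: cof_add cof_scale cscale_add cscale_scaleR scaleR_add_right add.assoc)
qed



lemma core_contra:
  fixes F D :: "cvec \<Rightarrow> cvec"
  assumes sym: "transpose B = B" and sW: "subspace W" and sQ: "subspace Q" and WQ: "W \<inter> Q = {0}"
    and a: "a \<in> W" and b: "b \<in> Q" and aa: "bil B a a > 0" and bb: "bil B b b > 0" and c: "c \<noteq> 0"
    and F: "(F has_derivative D) (at (Phi B c a b))" and cl: "clinear D"
    and rk: "dim (range D) = 2 * (22 - d)" and d22: "d \<le> 22" and dd: "d + 1 < dim W + dim Q"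
    and Z1: "eventually (\<lambda>t. F (Phi B (c + complex_of_real t) a b) = 0) (nhds 0)"
    and Z2: "\<And>v. v \<in> W \<Longrightarrow> bil B a v = 0 \<Longrightarrow> eventually (\<lambda>t. F (Phi B c (a + t *\<^sub>R v) b) = 0) (nhds 0)"
    and Z3: "\<And>u. u \<in> Q \<Longrightarrow> bil B b u = 0 \<Longrightarrow> eventually (\<lambda>t. F (Phi B c a (b + t *\<^sub>R u)) = 0) (nhds 0)"
  shows False
proof -
  have lD: "linear D" and cD: "\<And>c v. D (cscale c v) = cscale c (D v)" using cl by (auto simp: clinear_def)
  have lampos: "lam B a b > 0" unfolding lam_def using aa bb by simp
  have D1: "D (Phi B 1 a b) = 0"
  proof (rule deriv_zero_curve[where \<gamma>="\<lambda>t. Phi B (c + complex_of_real t) a b" and F=F, OF _ _ lD Z1])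
    have "((\<lambda>t. Phi B c a b + t *\<^sub>R Phi B 1 a b) has_derivative (\<lambda>t. t *\<^sub>R Phi B 1 a b)) (at 0)"
      by (auto intro!: derivative_eq_intros)
    then show "((\<lambda>t. Phi B (c + complex_of_real t) a b) has_derivative (\<lambda>t. t *\<^sub>R Phi B 1 a b)) (at 0)"
      by (simp add: Phi_c)
    show "(F has_derivative D) (at (Phi B (c + complex_of_real 0) a b))" using F by simp
  qed
  have Dw: "D (cof a + cscale \<i> (cof (lam B a b *\<^sub>R b))) = 0" using D1 by (simp add: Phi_def)
  have DW: "D (cof v) = 0" if v: "v \<in> W" "bil B a v = 0" for v
  proof -
    let ?P = "cscale c (cof a + cscale \<i> (cof (0 *\<^sub>R b)))" and ?X = "cscale c (cof v)"
      and ?Y = "cscale c (cscale \<i> (cof b))"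
    let ?f = "\<lambda>t. sqrt ((bil B a a + t^2 * bil B v v) / bil B b b)"
    have f': "(?f has_real_derivative 0) (at 0)"
      using aa bb by (auto intro!: derivative_eq_intros dest: divide_pos_pos[of "bil B a a" "bil B b b"])
    have g': "((\<lambda>t. t) has_real_derivative 1) (at 0)" by (rule DERIV_ident)
    have "((\<lambda>t. ?P + t *\<^sub>R ?X + ?f t *\<^sub>R ?Y) has_derivative (\<lambda>t. t *\<^sub>R (1 *\<^sub>R ?X + 0 *\<^sub>R ?Y))) (at 0)"
      by (rule curve_deriv[OF g' f'])
    then have g: "((\<lambda>t. Phi B c (a + t *\<^sub>R v) b) has_derivative (\<lambda>t. t *\<^sub>R ?X)) (at 0)"
      by (simp add: Phi_v[OF sym v(2)])
    have "D ?X = 0"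
      by (rule deriv_zero_curve[where F=F, OF g _ lD Z2[OF v]]) (use F in simp)
    then have "cscale c (D (cof v)) = 0" using cD by simp
    then show ?thesis using c cscale_eq_0 by blast
  qed
  have DQ: "D (cof u) = 0" if u: "u \<in> Q" "bil B b u = 0" for u
  proof -
    let ?P = "cscale c (cof a)" and ?X = "cscale c (cscale \<i> (cof b))"
      and ?Y = "cscale c (cscale \<i> (cof u))"
    let ?f = "\<lambda>t. sqrt (bil B a a / (bil B b b + t^2 * bil B u u))"
    have f': "(?f has_real_derivative 0) (at 0)"
      using aa bb by (auto intro!: derivative_eq_intros dest: divide_pos_pos[of "bil B a a" "bil B b b"])
    have f0: "?f 0 = lam B a b" by (simp add: lam_def)
    have h': "((\<lambda>t. t * ?f t) has_real_derivative lam B a b) (at 0)"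
      using DERIV_mult[OF DERIV_ident f'] f0 by simp
    have "((\<lambda>t. ?P + ?f t *\<^sub>R ?X + (t * ?f t) *\<^sub>R ?Y) has_derivative (\<lambda>t. t *\<^sub>R (0 *\<^sub>R ?X + lam B a b *\<^sub>R ?Y))) (at 0)"
      by (rule curve_deriv[OF f' h'])
    then have g: "((\<lambda>t. Phi B c a (b + t *\<^sub>R u)) has_derivative (\<lambda>t. t *\<^sub>R (lam B a b *\<^sub>R ?Y))) (at 0)"
      by (simp add: Phi_u[OF sym u(2)])
    have "D (lam B a b *\<^sub>R ?Y) = 0"
      by (rule deriv_zero_curve[where F=F, OF g _ lD Z3[OF u]]) (use F in simp)
    then have "lam B a b *\<^sub>R cscale (c * \<i>) (D (cof u)) = 0" using cD lD by (simp add: linear_scale cscale_cscale)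
    then have "cscale (c * \<i>) (D (cof u)) = 0" using lampos by simp
    then show ?thesis using c cscale_eq_0[of "c * \<i>"] by simp
  qed
  have "2 * (dim W + dim Q) \<le> dim {x. D x = 0} + 2"
    by (rule ker_count[OF sW sQ WQ a b _ cl DW DQ Dw]) (use aa in auto)
  moreover have "dim {x. D x = 0} + dim (range D) \<le> 44" by (rule dim_ker_range[OF lD])
  ultimately show False using rk d22 dd by presburger
qed



lemma avoid_one:
  fixes \<Psi> :: "'p::real_normed_vector \<Rightarrow> cvec"
  assumes cont: "continuous_on G0 \<Psi>" and oG0: "open G0" and M: "csubmanifold M d"
    and noopen: "\<And>G1 g U F D. open G1 \<Longrightarrow> g \<in> G1 \<Longrightarrow> G1 \<subseteq> G0 \<Longrightarrow> open U \<Longrightarrow> \<Psi> g \<in> U \<Longrightarrow>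
        (\<forall>z\<in>U. (F has_derivative D z) (at z) \<and> clinear (D z) \<and> dim (range (D z)) = 2 * (22 - d)) \<Longrightarrow>
        (\<forall>x\<in>G1. F (\<Psi> x) = 0) \<Longrightarrow> False"
    and G: "open G" "G \<noteq> {}" "G \<subseteq> G0"
  shows "\<exists>G'. open G' \<and> G' \<noteq> {} \<and> G' \<subseteq> G \<and> (\<forall>x\<in>G'. \<Psi> x \<notin> M)"
proof (cases "\<forall>x\<in>G. \<Psi> x \<notin> M")
  case True then show ?thesis using G by blast
next
  case False
  then obtain g where g: "g \<in> G" "\<Psi> g \<in> M" by blast
  from M g(2) obtain U F D where U: "open U" "\<Psi> g \<in> U"
    and FD: "\<forall>z\<in>U. (F has_derivative D z) (at z) \<and> clinear (D z) \<and> dim (range (D z)) = 2 * (22 - d)"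
    and MU: "M \<inter> U = {z\<in>U. F z = (0::cvec)}"
    unfolding csubmanifold_def by blast
  define G1 where "G1 = G \<inter> (G0 \<inter> \<Psi> -` U)"
  have oG1: "open G1" unfolding G1_def using G(1) continuous_open_preimage[OF cont oG0 U(1)] by blast
  have gG1: "g \<in> G1" unfolding G1_def using g G(3) U(2) by auto
  have G1G0: "G1 \<subseteq> G0" unfolding G1_def by auto
  have "\<not> (\<forall>x\<in>G1. F (\<Psi> x) = 0)"
    using noopen[OF oG1 gG1 G1G0 U FD] by blast
  then obtain x1 where x1: "x1 \<in> G1" "F (\<Psi> x1) \<noteq> 0" by blast
  have contF: "continuous_on U F"
    using FD by (intro continuous_at_imp_continuous_on) (auto dest: has_derivative_continuous)
  have cont1: "continuous_on G1 (F \<circ> \<Psi>)"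
  proof (rule continuous_on_compose)
    show "continuous_on G1 \<Psi>" using cont G1G0 continuous_on_subset by blast
    have "\<Psi> ` G1 \<subseteq> U" unfolding G1_def by auto
    then show "continuous_on (\<Psi> ` G1) F" using contF continuous_on_subset by blast
  qed
  define G' where "G' = G1 \<inter> (F \<circ> \<Psi>) -` (- {0})"
  have oG': "open G'" unfolding G'_def using continuous_open_preimage[OF cont1 oG1] by blast
  have "x1 \<in> G'" unfolding G'_def using x1 by auto
  moreover have "\<Psi> x \<notin> M" if "x \<in> G'" for x
  proof
    assume "\<Psi> x \<in> M"
    moreover have "\<Psi> x \<in> U" using that unfolding G'_def G1_def by auto
    ultimately have "F (\<Psi> x) = 0" using MU by blast
    then show False using that unfolding G'_def by auto
  qed
  moreover have "G' \<subseteq> G" unfolding G'_def G1_def by auto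
  ultimately show ?thesis using oG' by blast
qed

lemma avoid_finite:
  assumes fin: "finite J"
    and step: "\<And>j G. j \<in> J \<Longrightarrow> open G \<Longrightarrow> G \<noteq> {} \<Longrightarrow> G \<subseteq> G0 \<Longrightarrow>
        \<exists>G'. open G' \<and> G' \<noteq> {} \<and> G' \<subseteq> G \<and> (\<forall>x\<in>G'. x \<notin> Bad j)"
    and oG0: "open G0" and ne: "G0 \<noteq> {}"
  shows "\<exists>x\<in>G0. \<forall>j\<in>J. x \<notin> Bad j"
proof -
  have main: "\<forall>G. open G \<and> G \<noteq> {} \<and> G \<subseteq> G0 \<longrightarrow>
        (\<exists>G'. open G' \<and> G' \<noteq> {} \<and> G' \<subseteq> G \<and> (\<forall>x\<in>G'. \<forall>j\<in>J'. x \<notin> Bad j))"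
    if "J' \<subseteq> J" for J'
  proof -
    have "finite J'" using that fin finite_subset by blast
    then show ?thesis using that
    proof (induction J')
      case empty
      show ?case by auto
    next
      case (insert j J')
      show ?case
      proof (intro allI impI)
        fix G assume G: "open G \<and> G \<noteq> {} \<and> G \<subseteq> G0"
        have "J' \<subseteq> J" using insert.prems by simp
        then obtain G1 where G1: "open G1" "G1 \<noteq> {}" "G1 \<subseteq> G" "\<forall>x\<in>G1. \<forall>j\<in>J'. x \<notin> Bad j"
          using insert.IH G by meson
        have "j \<in> J" using insert.prems by simp
        moreover have "G1 \<subseteq> G0" using G1(3) G by blast
        ultimately obtain G2 where G2: "open G2" "G2 \<noteq> {}" "G2 \<subseteq> G1" "\<forall>x\<in>G2. x \<notin> Bad j"
          using step[of j G1] G1(1,2) by meson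
        have "\<forall>x\<in>G2. \<forall>j'\<in>insert j J'. x \<notin> Bad j'" using G1(4) G2(3,4) by blast
        moreover have "G2 \<subseteq> G" using G1(3) G2(3) by simp
        ultimately show "\<exists>G'. open G' \<and> G' \<noteq> {} \<and> G' \<subseteq> G \<and> (\<forall>x\<in>G'. \<forall>j\<in>insert j J'. x \<notin> Bad j)"
          using G2(1,2) by blast
      qed
    qed
  qed
  obtain G' where "open G'" "G' \<noteq> {}" "G' \<subseteq> G0" "\<forall>x\<in>G'. \<forall>j\<in>J. x \<notin> Bad j"
    using main[of J] oG0 ne by blast
  then show ?thesis by blast
qed

lemma eventually_line:
  fixes g h :: "'p::real_normed_vector"
  assumes "open G1" "g \<in> G1"
  shows "eventually (\<lambda>t::real. g + t *\<^sub>R h \<in> G1) (nhds 0)"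
proof -
  obtain e where e: "e > 0" "ball g e \<subseteq> G1" using assms open_contains_ball by blast
  have "\<forall>t. dist t 0 < e / (norm h + 1) \<longrightarrow> g + t *\<^sub>R h \<in> G1"
  proof (intro allI impI)
    fix t :: real assume "dist t 0 < e / (norm h + 1)"
    moreover have hp: "0 < norm h + 1" using norm_ge_zero[of h] by linarith
    ultimately have t: "\<bar>t\<bar> * (norm h + 1) < e" using pos_less_divide_eq[OF hp] by simp
    have "dist g (g + t *\<^sub>R h) = \<bar>t\<bar> * norm h" by (simp add: dist_norm)
    also have "\<dots> \<le> \<bar>t\<bar> * (norm h + 1)" by (simp add: mult_left_mono)
    finally have "dist g (g + t *\<^sub>R h) < e" using t by linarith
    then show "g + t *\<^sub>R h \<in> G1" using e by auto
  qed
  moreover have "norm h + 1 > 0" using norm_ge_zero[of h] by linarith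
  then have "e / (norm h + 1) > 0" using e by (simp add: divide_pos_pos)
  ultimately show ?thesis unfolding eventually_nhds_metric by blast
qed



locale setting =
  fixes B :: "real^22^22" and Np Nm Ampp Ampm :: "rvec set" and rp rm :: nat
  assumes K3: "K3_form B"
    and pNp: "primitive_sublattice Np" and pNm: "primitive_sublattice Nm"
    and sigp: "form_signature B (span Np) 1 (rp - 1)"
    and sigm: "form_signature B (span Nm) 1 (rm - 1)"
    and ampp: "amp_cone B Np Ampp" and ampm: "amp_cone B Nm Ampm"
    and negR: "neg_def_on B (span (Np \<inter> Nm))"
    and decp: "span Np = {x + y | x y. x \<in> span (Np \<inter> Nm) \<and> y \<in> span (orth_compl B Nm \<inter> Np)}"
    and intp: "span (Np \<inter> Nm) \<inter> span (orth_compl B Nm \<inter> Np) = {0}"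
    and decm: "span Nm = {x + y | x y. x \<in> span (Np \<inter> Nm) \<and> y \<in> span (orth_compl B Np \<inter> Nm)}"
    and intm: "span (Np \<inter> Nm) \<inter> span (orth_compl B Np \<inter> Nm) = {0}"
    and Ap: "span (orth_compl B Nm \<inter> Np) \<inter> Ampp \<noteq> {}"
    and Am: "span (orth_compl B Np \<inter> Nm) \<inter> Ampm \<noteq> {}"
begin

abbreviation "R \<equiv> span (Np \<inter> Nm)"
abbreviation "Wp \<equiv> span (orth_compl B Nm \<inter> Np)"
abbreviation "Wm \<equiv> span (orth_compl B Np \<inter> Nm)"
abbreviation "Q \<equiv> {x. \<forall>y\<in>Np \<union> Nm. bil B x y = 0}"

lemma sym: "transpose B = B" using K3 by (simp add: K3_form_def)

lemma bsym: "bil B x y = bil B y x" using bil_sym[OF sym] .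

lemma ND_UNIV: "(\<forall>y. bil B x y = 0) \<Longrightarrow> x = 0"
  using K3 unfolding K3_form_def form_signature_def by blast

lemma ND_p: "x \<in> span Np \<Longrightarrow> (\<forall>y\<in>span Np. bil B x y = 0) \<Longrightarrow> x = 0"
  using sigp unfolding form_signature_def by blast
lemma ND_m: "x \<in> span Nm \<Longrightarrow> (\<forall>y\<in>span Nm. bil B x y = 0) \<Longrightarrow> x = 0"
  using sigm unfolding form_signature_def by blast

lemma posdim_p: "subspace W \<Longrightarrow> W \<subseteq> span Np \<Longrightarrow> pos_def_on B W \<Longrightarrow> dim W \<le> 1"
  using sigp unfolding form_signature_def by auto
lemma posdim_m: "subspace W \<Longrightarrow> W \<subseteq> span Nm \<Longrightarrow> pos_def_on B W \<Longrightarrow> dim W \<le> 1"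
  using sigm unfolding form_signature_def by auto

lemma Wp_orth: "x \<in> Wp \<Longrightarrow> y \<in> span Nm \<Longrightarrow> bil B x y = 0"
  by (rule bil_span_orth[of "orth_compl B Nm \<inter> Np" Nm]) (auto simp: orth_compl_def)
lemma Wm_orth: "x \<in> Wm \<Longrightarrow> y \<in> span Np \<Longrightarrow> bil B x y = 0"
  by (rule bil_span_orth[of "orth_compl B Np \<inter> Nm" Np]) (auto simp: orth_compl_def)
lemma Q_orth_p: "x \<in> Q \<Longrightarrow> y \<in> span Np \<Longrightarrow> bil B x y = 0"
  by (rule bil_span_orth[of "{x}" Np]) (auto simp: span_base)
lemma Q_orth_m: "x \<in> Q \<Longrightarrow> y \<in> span Nm \<Longrightarrow> bil B x y = 0"
  by (rule bil_span_orth[of "{x}" Nm]) (auto simp: span_base)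

lemma subspace_Q: "subspace Q"
  by (auto simp: subspace_def bil_simps)

lemma Wp_sub: "Wp \<subseteq> span Np" by (rule span_mono) auto
lemma Wm_sub: "Wm \<subseteq> span Nm" by (rule span_mono) auto
lemma R_sub_p: "R \<subseteq> span Np" by (rule span_mono) auto
lemma R_sub_m: "R \<subseteq> span Nm" by (rule span_mono) auto

lemma QWm: "Wm \<inter> Q = {0}"
proof -
  have "x = 0" if "x \<in> Wm" "x \<in> Q" for x
    using ND_m[of x] Q_orth_m[of x] that Wm_sub by blast
  then show ?thesis by (auto simp: span_zero)
qed
lemma QWp: "Wp \<inter> Q = {0}"
proof -
  have "x = 0" if "x \<in> Wp" "x \<in> Q" for x
    using ND_p[of x] Q_orth_p[of x] that Wp_sub by blast
  then show ?thesis by (auto simp: span_zero)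
qed

definition phi :: "rvec \<Rightarrow> rvec" where "phi x = B *v x"

lemma linear_phi: "linear phi" unfolding phi_def by simp

lemma bil_phi: "bil B x y = y \<bullet> phi x"
  unfolding phi_def by (metis bil_def bsym)

lemma inj_phi: "inj phi"
proof -
  have "x = 0" if "phi x = 0" for x
    using ND_UNIV[of x] that bil_phi by simp
  then show ?thesis using linear_phi by (simp add: linear_injective_0)
qed

lemma surj_phi: "surj phi"
  using linear_injective_imp_surjective[OF linear_phi inj_phi] by simp

lemma dim_UNIV_rvec: "dim (UNIV :: rvec set) = 22"
  by (simp add: dim_UNIV DIM_cart)

lemma dim_std: "dim {z. \<forall>y\<in>span S. orthogonal y z} + dim (span S) = 22" for S :: "rvec set"
  using dim_subspace_orthogonal_to_vectors[of "span S" UNIV] dim_UNIV_rvec by simp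

lemma dim_perp_le: "dim {x. \<forall>y\<in>span S. bil B x y = 0} + dim (span S) \<le> 22"
proof -
  let ?P = "{x. \<forall>y\<in>span S. bil B x y = 0}"
  have "phi ` ?P \<subseteq> {z. \<forall>y\<in>span S. orthogonal y z}"
    by (auto simp: orthogonal_def bil_phi)
  then have "dim (phi ` ?P) \<le> dim {z. \<forall>y\<in>span S. orthogonal y z}" by (rule dim_subset)
  moreover have "dim (phi ` ?P) = dim ?P"
    by (rule dim_image_eq[OF linear_phi]) (use inj_phi in \<open>auto simp: inj_on_def inj_def\<close>)
  ultimately show ?thesis using dim_std[of S] by linarith
qed

lemma dim_perp_ge: "22 \<le> dim {x. \<forall>y\<in>S. bil B x y = 0} + dim (span S)"
proof -
  let ?P = "{x. \<forall>y\<in>S. bil B x y = 0}"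
  have "{z. \<forall>y\<in>span S. orthogonal y z} \<subseteq> phi ` ?P"
  proof
    fix z assume z: "z \<in> {z. \<forall>y\<in>span S. orthogonal y z}"
    obtain x where x: "z = phi x" using surj_phi by (metis surjD)
    have "x \<in> ?P" using z x by (auto simp: bil_phi orthogonal_def span_base)
    then show "z \<in> phi ` ?P" using x by auto
  qed
  then have "dim {z. \<forall>y\<in>span S. orthogonal y z} \<le> dim (phi ` ?P)" by (rule dim_subset)
  also have "\<dots> \<le> dim ?P" by (rule dim_image_le[OF linear_phi])
  finally show ?thesis using dim_std[of S] by linarith
qed

lemma span_orth_sub: "span (orth_compl B N) \<subseteq> {x. \<forall>y\<in>span N. bil B x y = 0}"
proof (rule span_minimal)
  show "orth_compl B N \<subseteq> {x. \<forall>y\<in>span N. bil B x y = 0}"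
  proof
    fix x assume "x \<in> orth_compl B N"
    then have "\<forall>y\<in>N. bil B x y = 0" by (simp add: orth_compl_def)
    then show "x \<in> {x. \<forall>y\<in>span N. bil B x y = 0}"
      using bil_span_orth[of "{x}" N B x] by (auto simp: span_base)
  qed
  show "subspace {x. \<forall>y\<in>span N. bil B x y = 0}" by (auto simp: subspace_def bil_simps)
qed

lemma dim_NpNm_p: "dim (span (Np \<union> Nm)) \<le> dim (span Np) + dim Wm"
proof -
  let ?S = "{x + y | x y. x \<in> span Np \<and> y \<in> Wm}"
  have sS: "subspace ?S" by (rule subspace_sums) auto
  have "Np \<union> Nm \<subseteq> ?S"
  proof
    fix z assume "z \<in> Np \<union> Nm"
    then show "z \<in> ?S"
    proof
      assume "z \<in> Np"
      then have "z = z + 0" "z \<in> span Np" "0 \<in> Wm" by (auto simp: span_base span_zero)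
      then show ?thesis by blast
    next
      assume "z \<in> Nm"
      then have "z \<in> span Nm" by (simp add: span_base)
      then obtain x y where "z = x + y" "x \<in> R" "y \<in> Wm" using decm by blast
      then show ?thesis using R_sub_p by blast
    qed
  qed
  then have "span (Np \<union> Nm) \<subseteq> ?S" using sS span_minimal by blast
  then have "dim (span (Np \<union> Nm)) \<le> dim ?S" by (rule dim_subset)
  moreover have "dim ?S + dim (span Np \<inter> Wm) = dim (span Np) + dim Wm"
    by (rule dim_sums_Int) auto
  ultimately show ?thesis by linarith
qed

lemma dim_NpNm_m: "dim (span (Np \<union> Nm)) \<le> dim (span Nm) + dim Wp"
proof -
  let ?S = "{x + y | x y. x \<in> span Nm \<and> y \<in> Wp}"
  have sS: "subspace ?S" by (rule subspace_sums) auto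
  have "Np \<union> Nm \<subseteq> ?S"
  proof
    fix z assume "z \<in> Np \<union> Nm"
    then show "z \<in> ?S"
    proof
      assume "z \<in> Nm"
      then have "z = z + 0" "z \<in> span Nm" "0 \<in> Wp" by (auto simp: span_base span_zero)
      then show ?thesis by blast
    next
      assume "z \<in> Np"
      then have "z \<in> span Np" by (simp add: span_base)
      then obtain x y where "z = x + y" "x \<in> R" "y \<in> Wp" using decp by blast
      then show ?thesis using R_sub_m by blast
    qed
  qed
  then have "span (Np \<union> Nm) \<subseteq> ?S" using sS span_minimal by blast
  then have "dim (span (Np \<union> Nm)) \<le> dim ?S" by (rule dim_subset)
  moreover have "dim ?S + dim (span Nm \<inter> Wp) = dim (span Nm) + dim Wp"
    by (rule dim_sums_Int) auto
  ultimately show ?thesis by linarith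
qed

lemma dim_orth_p: "dim (span (orth_compl B Np)) \<le> dim Wm + dim Q"
proof -
  have "dim (span (orth_compl B Np)) \<le> dim {x. \<forall>y\<in>span Np. bil B x y = 0}"
    by (rule dim_subset[OF span_orth_sub])
  moreover have "dim {x. \<forall>y\<in>span Np. bil B x y = 0} + dim (span Np) \<le> 22" by (rule dim_perp_le)
  moreover have "22 \<le> dim Q + dim (span (Np \<union> Nm))" by (rule dim_perp_ge)
  ultimately show ?thesis using dim_NpNm_p by linarith
qed

lemma dim_orth_m: "dim (span (orth_compl B Nm)) \<le> dim Wp + dim Q"
proof -
  have "dim (span (orth_compl B Nm)) \<le> dim {x. \<forall>y\<in>span Nm. bil B x y = 0}"
    by (rule dim_subset[OF span_orth_sub])
  moreover have "dim {x. \<forall>y\<in>span Nm. bil B x y = 0} + dim (span Nm) \<le> 22" by (rule dim_perp_le)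
  moreover have "22 \<le> dim Q + dim (span (Np \<union> Nm))" by (rule dim_perp_ge)
  ultimately show ?thesis using dim_NpNm_m by linarith
qed

end



context setting begin

lemma amp_pos_p: "x \<in> Ampp \<Longrightarrow> bil B x x > 0"
proof -
  assume x: "x \<in> Ampp"
  obtain C where "C \<in> components {x\<in>span Np. bil B x x > 0}" "Ampp \<subseteq> C"
    using ampp unfolding amp_cone_def by blast
  then show ?thesis using x in_components_subset by blast
qed
lemma amp_pos_m: "x \<in> Ampm \<Longrightarrow> bil B x x > 0"
proof -
  assume x: "x \<in> Ampm"
  obtain C where "C \<in> components {x\<in>span Nm. bil B x x > 0}" "Ampm \<subseteq> C"
    using ampm unfolding amp_cone_def by blast
  then show ?thesis using x in_components_subset by blast
qed

lemma two_pos: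
  assumes a: "bil B a a > 0" and x: "bil B x x > 0" and ax: "bil B a x = 0"
  shows "subspace (span {a, x}) \<and> pos_def_on B (span {a, x}) \<and> dim (span {a, x}) = 2"
proof -
  have xa: "bil B x a = 0" using ax bsym by metis
  have x0: "x \<noteq> 0" using x by auto
  have a_nx: "a \<notin> span {x}"
  proof
    assume "a \<in> span {x}"
    then obtain k where "a = k *\<^sub>R x" by (auto simp: span_singleton)
    then have "bil B a x = k * bil B x x" by (simp add: bil_simps)
    then have "k = 0" using ax x by simp
    then show False using \<open>a = k *\<^sub>R x\<close> a by simp
  qed
  have "dim {a, x} = 2" using a_nx x0 by (simp add: dim_insert span_empty)
  moreover have "pos_def_on B (span {a, x})"
    unfolding pos_def_on_def
  proof (intro ballI impI)
    fix z assume z: "z \<in> span {a, x}" "z \<noteq> 0"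
    then obtain s where "z - s *\<^sub>R a \<in> span {x}" by (auto simp: span_insert)
    then obtain t where t: "z - s *\<^sub>R a = t *\<^sub>R x" by (auto simp: span_singleton)
    then have zst: "z = s *\<^sub>R a + t *\<^sub>R x" by (simp add: algebra_simps)
    have "bil B z z = s * s * bil B a a + t * t * bil B x x"
      unfolding zst by (simp add: bil_simps ax xa)
    moreover have "s \<noteq> 0 \<or> t \<noteq> 0" using z(2) zst by auto
    moreover have "0 < s * s \<or> 0 < t * t" using \<open>s \<noteq> 0 \<or> t \<noteq> 0\<close> not_real_square_gt_zero by blast
    moreover have "0 \<le> s * s" "0 \<le> t * t" by simp_all
    ultimately show "bil B z z > 0" using a x
      by (smt (verit) mult_pos_pos mult_nonneg_nonneg)
  qed
  ultimately show ?thesis by simp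
qed

lemma negsemi_p: "ap \<in> Ampp \<Longrightarrow> ap \<in> Wp \<Longrightarrow> x \<in> Wp \<Longrightarrow> bil B ap x = 0 \<Longrightarrow> bil B x x \<le> 0"
proof (rule ccontr)
  assume h: "ap \<in> Ampp" "ap \<in> Wp" "x \<in> Wp" "bil B ap x = 0" "\<not> bil B x x \<le> 0"
  have tp: "subspace (span {ap, x}) \<and> pos_def_on B (span {ap, x}) \<and> dim (span {ap, x}) = 2"
    using two_pos[of ap x] amp_pos_p h by simp
  have "span {ap, x} \<subseteq> span Np" using h Wp_sub by (intro span_minimal) auto
  then show False using posdim_p[of "span {ap, x}"] tp by simp
qed

lemma negsemi_m: "am \<in> Ampm \<Longrightarrow> am \<in> Wm \<Longrightarrow> x \<in> Wm \<Longrightarrow> bil B am x = 0 \<Longrightarrow> bil B x x \<le> 0"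
proof (rule ccontr)
  assume h: "am \<in> Ampm" "am \<in> Wm" "x \<in> Wm" "bil B am x = 0" "\<not> bil B x x \<le> 0"
  have tp: "subspace (span {am, x}) \<and> pos_def_on B (span {am, x}) \<and> dim (span {am, x}) = 2"
    using two_pos[of am x] amp_pos_m h by simp
  have "span {am, x} \<subseteq> span Nm" using h Wm_sub by (intro span_minimal) auto
  then show False using posdim_m[of "span {am, x}"] tp by simp
qed

lemma R_neg: "z \<in> R \<Longrightarrow> bil B z z \<le> 0"
  using negR unfolding neg_def_on_def by (cases "z = 0") (auto simp: less_imp_le)

lemma dim_Np: "dim (span Np) = dim R + dim Wp"
proof -
  have "dim {x + y | x y. x \<in> R \<and> y \<in> Wp} + dim (R \<inter> Wp) = dim R + dim Wp"
    by (rule dim_sums_Int) auto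
  then show ?thesis using decp intp by simp
qed

end



context setting begin

lemma subspace_bil_ker: "subspace {v. bil B a v = 0}"
  by (auto simp: subspace_def bil_simps)

lemma pos_in_Q: "\<exists>b\<in>Q. bil B b b > 0"
proof (rule ccontr)
  assume nex: "\<not> (\<exists>b\<in>Q. bil B b b > 0)"
  have Qneg: "bil B q q \<le> 0" if qQ: "q \<in> Q" for q
  proof (rule ccontr)
    assume "\<not> bil B q q \<le> 0"
    then have "bil B q q > 0" by simp
    then show False using nex qQ by blast
  qed
  obtain ap where ap: "ap \<in> Wp" "ap \<in> Ampp" using Ap by (meson IntE ex_in_conv)
  obtain am where am: "am \<in> Wm" "am \<in> Ampm" using Am by (meson IntE ex_in_conv)
  let ?Kp = "Wp \<inter> {v. bil B ap v = 0}" and ?Km = "Wm \<inter> {v. bil B am v = 0}"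
  have sKp: "subspace ?Kp" by (rule subspace_inter[OF subspace_span subspace_bil_ker])
  have sKm: "subspace ?Km" by (rule subspace_inter[OF subspace_span subspace_bil_ker])
  define K2 where "K2 = {y + z | y z. y \<in> ?Km \<and> z \<in> R}"
  define K where "K = {x + y | x y. x \<in> ?Kp \<and> y \<in> K2}"
  define T where "T = {k + q | k q. k \<in> K \<and> q \<in> Q}"
  have sK2: "subspace K2" unfolding K2_def by (rule subspace_sums[OF sKm]) simp
  have sK: "subspace K" unfolding K_def by (rule subspace_sums[OF sKp sK2])
  have sT: "subspace T" unfolding T_def by (rule subspace_sums[OF sK subspace_Q])
  have i1: "?Km \<inter> R = {0}"
  proof -
    have h0: "x = 0" if xx: "x \<in> ?Km" "x \<in> R" for x
    proof -
      have "x \<in> span Np" using xx(2) R_sub_p by blast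
      moreover have "\<forall>w\<in>span Np. bil B x w = 0" using Wm_orth xx(1) by blast
      ultimately show "x = 0" using ND_p by blast
    qed
    have "?Km \<inter> R \<subseteq> {0}" using h0 by blast
    moreover have "0 \<in> ?Km \<inter> R" by (simp add: span_zero)
    ultimately show ?thesis by blast
  qed
  have i2: "?Kp \<inter> K2 = {0}"
  proof -
    have h0: "x = 0" if x: "x \<in> ?Kp" "x \<in> K2" for x
    proof -
      obtain y z where yz: "x = y + z" "y \<in> ?Km" "z \<in> R" using x(2) unfolding K2_def by blast
      have "y = x - z" using yz by simp
      moreover have "x \<in> span Np" using x(1) Wp_sub by blast
      moreover have "z \<in> span Np" using yz(3) R_sub_p by blast
      ultimately have yNp: "y \<in> span Np" using span_diff by metis
      have "\<forall>w\<in>span Np. bil B y w = 0" using Wm_orth yz(2) by blast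
      then have "y = 0" using ND_p yNp by blast
      then have "x = z" using yz by simp
      then have "x \<in> R \<inter> Wp" using x(1) yz(3) by simp
      then show "x = 0" using intp by simp
    qed
    have "(0::rvec) = 0 + 0" by simp
    moreover have "0 \<in> ?Km" "(0::rvec) \<in> R" by (simp_all add: span_zero)
    ultimately have "0 \<in> K2" unfolding K2_def by blast
    moreover have "0 \<in> ?Kp" by (simp add: span_zero)
    ultimately have "0 \<in> ?Kp \<inter> K2" by blast
    moreover have "?Kp \<inter> K2 \<subseteq> {0}" using h0 by blast
    ultimately show ?thesis by blast
  qed
  have z2: "0 \<in> K2"
  proof -
    have "(0::rvec) = 0 + 0" by simp
    moreover have "0 \<in> ?Km" "(0::rvec) \<in> R" by (simp_all add: span_zero)
    ultimately show "0 \<in> K2" unfolding K2_def by blast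
  qed
  have i3: "K \<inter> Q = {0}"
  proof -
    have h0: "k = 0" if k: "k \<in> K" "k \<in> Q" for k
    proof -
      obtain x y' where xy: "k = x + y'" "x \<in> ?Kp" "y' \<in> K2" using k(1) unfolding K_def by blast
      obtain y z where yz: "y' = y + z" "y \<in> ?Km" "z \<in> R" using xy(3) unfolding K2_def by blast
      have xz: "x + z \<in> span Np" using xy(2) yz(3) Wp_sub R_sub_p span_add by blast
      have "\<forall>w\<in>span Np. bil B (x + z) w = 0"
      proof
        fix w assume w: "w \<in> span Np"
        have "bil B k w = 0" using Q_orth_p k(2) w by blast
        moreover have "bil B y w = 0" using Wm_orth yz(2) w by blast
        moreover have "k = (x + z) + y" using xy yz by (simp add: algebra_simps)
        ultimately show "bil B (x + z) w = 0" by (simp add: bil_simps)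
      qed
      then have "x + z = 0" using ND_p xz by blast
      then have "x = - z" by (simp add: eq_neg_iff_add_eq_0)
      moreover have "- z \<in> R" using yz(3) span_neg by blast
      ultimately have "x = 0" using intp xy(2) by blast
      then have "z = 0" using \<open>x + z = 0\<close> by simp
      then have "k = y" using xy yz \<open>x = 0\<close> by simp
      then show "k = 0" using QWm k(2) yz(2) by blast
    qed
    have "(0::rvec) = 0 + 0" by simp
    moreover have "0 \<in> ?Kp" by (simp add: span_zero)
    ultimately have "0 \<in> K" unfolding K_def using z2 by blast
    then show ?thesis using h0 by auto
  qed
  have "dim K2 + dim (?Km \<inter> R) = dim ?Km + dim R" unfolding K2_def by (rule dim_sums_Int[OF sKm]) simp
  then have dK2: "dim K2 = dim ?Km + dim R" using i1 by simp
  have "dim K + dim (?Kp \<inter> K2) = dim ?Kp + dim K2" unfolding K_def by (rule dim_sums_Int[OF sKp sK2])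
  then have dK: "dim K = dim ?Kp + dim K2" using i2 by simp
  have "dim T + dim (K \<inter> Q) = dim K + dim Q" unfolding T_def by (rule dim_sums_Int[OF sK subspace_Q])
  then have dT: "dim T = dim K + dim Q" using i3 by simp
  have hp: "dim Wp \<le> dim ?Kp + 1" using dim_hyper_ge[OF _ linear_bil_right[of B ap], of Wp] by simp
  have hm: "dim Wm \<le> dim ?Km + 1" using dim_hyper_ge[OF _ linear_bil_right[of B am], of Wm] by simp
  have "22 \<le> dim Q + dim (span (Np \<union> Nm))" by (rule dim_perp_ge)
  then have dT20: "20 \<le> dim T" using dim_NpNm_p dim_Np dK2 dK dT hp hm by linarith
  have Tneg: "bil B t t \<le> 0" if t: "t \<in> T" for t
  proof -
    obtain k q where kq: "t = k + q" "k \<in> K" "q \<in> Q" using t unfolding T_def by blast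
    obtain x y' where xy: "k = x + y'" "x \<in> ?Kp" "y' \<in> K2" using kq(2) unfolding K_def by blast
    obtain y z where yz: "y' = y + z" "y \<in> ?Km" "z \<in> R" using xy(3) unfolding K2_def by blast
    have tt: "t = x + y + z + q" using kq xy yz by (simp add: algebra_simps)
    have xNp: "x \<in> span Np" using xy(2) Wp_sub by blast
    have yNm: "y \<in> span Nm" using yz(2) Wm_sub by blast
    have zNp: "z \<in> span Np" using yz(3) R_sub_p by blast
    have zNm: "z \<in> span Nm" using yz(3) R_sub_m by blast
    have xW: "x \<in> Wp" using xy(2) by blast
    have yW: "y \<in> Wm" using yz(2) by blast
    have o1: "bil B x y = 0" by (rule Wp_orth[OF xW yNm])
    have o2: "bil B x z = 0" by (rule Wp_orth[OF xW zNm])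
    have o3: "bil B y z = 0" by (rule Wm_orth[OF yW zNp])
    have o4: "bil B q x = 0" by (rule Q_orth_p[OF kq(3) xNp])
    have o5: "bil B q y = 0" by (rule Q_orth_m[OF kq(3) yNm])
    have o6: "bil B q z = 0" by (rule Q_orth_p[OF kq(3) zNp])
    have o1': "bil B y x = 0" using o1 bsym[of y x] by simp
    have o2': "bil B z x = 0" using o2 bsym[of z x] by simp
    have o3': "bil B z y = 0" using o3 bsym[of z y] by simp
    have o4': "bil B x q = 0" using o4 bsym[of x q] by simp
    have o5': "bil B y q = 0" using o5 bsym[of y q] by simp
    have o6': "bil B z q = 0" using o6 bsym[of z q] by simp
    have "bil B t t = bil B x x + bil B y y + bil B z z + bil B q q"
      unfolding tt by (simp only: bil_add_left bil_add_right o1 o2 o3 o4 o5 o6 o1' o2' o3' o4' o5' o6')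
    moreover have "bil B x x \<le> 0" using negsemi_p[OF ap(2) ap(1)] xy(2) by blast
    moreover have "bil B y y \<le> 0" using negsemi_m[OF am(2) am(1)] yz(2) by blast
    moreover have "bil B z z \<le> 0" using R_neg yz(3) by blast
    moreover have "bil B q q \<le> 0" using Qneg kq(3) by blast
    ultimately show ?thesis by linarith
  qed
  have fs: "form_signature B UNIV 3 19" using K3 by (simp add: K3_form_def)
  have "\<exists>W. subspace W \<and> W \<subseteq> UNIV \<and> dim W = 3 \<and> pos_def_on B W"
    using fs unfolding form_signature_def by (elim conjE) assumption
  then obtain W3 where W3: "subspace W3" "dim W3 = 3" "pos_def_on B W3" by blast
  have "dim {x + y | x y. x \<in> T \<and> y \<in> W3} + dim (T \<inter> W3) = dim T + dim W3"
    by (rule dim_sums_Int[OF sT W3(1)])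
  moreover have "dim {x + y | x y. x \<in> T \<and> y \<in> W3} \<le> dim (UNIV :: rvec set)"
    by (rule dim_subset) (rule subset_UNIV)
  ultimately have "1 \<le> dim (T \<inter> W3)" using dT20 W3(2) dim_UNIV_rvec by linarith
  then have "dim (T \<inter> W3) \<noteq> 0" by linarith
  have "\<not> (T \<inter> W3 \<subseteq> {0})"
  proof
    assume "T \<inter> W3 \<subseteq> {0}"
    then have "dim (T \<inter> W3) = 0" by (simp only: dim_eq_0)
    then show False using \<open>dim (T \<inter> W3) \<noteq> 0\<close> by simp
  qed
  then obtain x where x: "x \<in> T" "x \<in> W3" "x \<noteq> 0" by blast
  have "bil B x x > 0" using W3(3) x unfolding pos_def_on_def by blast
  moreover have "bil B x x \<le> 0" using Tneg x(1) by blast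
  ultimately show False by simp
qed

end



lemma Lint_comb: "x \<in> Lint \<Longrightarrow> y \<in> Lint \<Longrightarrow> c \<in> \<int> \<Longrightarrow> d \<in> \<int> \<Longrightarrow> c *\<^sub>R x - d *\<^sub>R y \<in> Lint"
  by (simp add: Lint_def Ints_mult Ints_diff)

lemma rat_kernel:
  fixes h :: "'g \<Rightarrow> rvec \<Rightarrow> real"
  assumes fin: "finite G" and lin: "\<And>g. linear (h g)" and int: "\<forall>g\<in>G. \<forall>x\<in>Lint. h g x \<in> \<int>"
    and S: "S \<subseteq> Lint"
  shows "\<exists>S'. S' \<subseteq> Lint \<and> (\<forall>s\<in>S'. \<forall>g\<in>G. h g s = 0) \<and> span S' = span S \<inter> {x. \<forall>g\<in>G. h g x = 0}"
  using fin int
proof (induction G)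
  case empty
  show ?case using S by (intro exI[of _ S]) auto
next
  case (insert g G)
  have intg: "\<forall>x\<in>Lint. h g x \<in> \<int>" using insert.prems by simp
  have intG: "\<forall>g\<in>G. \<forall>x\<in>Lint. h g x \<in> \<int>" using insert.prems by simp
  from insert.IH[OF intG] obtain S' where S': "S' \<subseteq> Lint" "\<forall>s\<in>S'. \<forall>g\<in>G. h g s = 0"
    "span S' = span S \<inter> {x. \<forall>g\<in>G. h g x = 0}" by blast
  have kerg: "subspace {x. h g x = 0}" using lin[of g] by (auto simp: subspace_def linear_add linear_scale linear_0)
  have eq: "span S \<inter> {x. \<forall>g'\<in>insert g G. h g' x = 0} = span S' \<inter> {x. h g x = 0}"
    using S'(3) by auto
  show ?case
  proof (cases "\<forall>s\<in>S'. h g s = 0")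
    case True
    have "span S' \<subseteq> {x. h g x = 0}" by (rule span_minimal) (use True kerg in auto)
    then have "span S' \<inter> {x. h g x = 0} = span S'" by blast
    then show ?thesis using S' True eq by (intro exI[of _ S']) auto
  next
    case False
    then obtain s0 where s0: "s0 \<in> S'" "h g s0 \<noteq> 0" by blast
    define c where "c = h g s0"
    define \<phi> where "\<phi> y = c *\<^sub>R y - h g y *\<^sub>R s0" for y
    have lphi: "linear \<phi>"
      unfolding \<phi>_def[abs_def] using lin[of g]
      by (intro linearI) (simp_all add: linear_add linear_scale algebra_simps)
    have hphi: "h g' (\<phi> y) = c * h g' y - h g y * h g' s0" for g' y
      unfolding \<phi>_def using lin[of g'] by (simp add: linear_diff linear_scale)
    let ?S'' = "\<phi> ` S'"
    have L: "?S'' \<subseteq> Lint"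
    proof
      fix z assume "z \<in> ?S''"
      then obtain y where y: "y \<in> S'" "z = \<phi> y" by blast
      have "y \<in> Lint" "s0 \<in> Lint" using y(1) s0(1) S'(1) by auto
      then show "z \<in> Lint" unfolding y(2) \<phi>_def c_def using Lint_comb intg by blast
    qed
    have K: "\<forall>z\<in>?S''. \<forall>g'\<in>insert g G. h g' z = 0"
    proof (intro ballI)
      fix z g' assume z: "z \<in> ?S''" and g': "g' \<in> insert g G"
      then obtain y where y: "y \<in> S'" "z = \<phi> y" by blast
      show "h g' z = 0"
      proof (cases "g' = g")
        case True then show ?thesis using y by (simp add: hphi c_def)
      next
        case False
        then have "g' \<in> G" using g' by simp
        then have "h g' y = 0" "h g' s0 = 0" using S'(2) y(1) s0(1) by auto
        then show ?thesis using y by (simp add: hphi)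
      qed
    qed
    have "span ?S'' = \<phi> ` span S'" by (rule linear_span_image[OF lphi])
    also have "\<dots> = span S' \<inter> {x. h g x = 0}"
    proof
      show "\<phi> ` span S' \<subseteq> span S' \<inter> {x. h g x = 0}"
      proof
        fix z assume "z \<in> \<phi> ` span S'"
        then obtain y where y: "y \<in> span S'" "z = \<phi> y" by blast
        have "s0 \<in> span S'" using s0(1) by (rule span_base)
        then have "z \<in> span S'" unfolding y(2) \<phi>_def using y(1) by (intro span_diff span_scale)
        moreover have "h g z = 0" using y(2) by (simp add: hphi c_def)
        ultimately show "z \<in> span S' \<inter> {x. h g x = 0}" by simp
      qed
      show "span S' \<inter> {x. h g x = 0} \<subseteq> \<phi> ` span S'"
      proof
        fix z assume z: "z \<in> span S' \<inter> {x. h g x = 0}"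
        have cne: "c \<noteq> 0" using s0(2) c_def by simp
        have "\<phi> ((1 / c) *\<^sub>R z) = (1 / c) *\<^sub>R \<phi> z" using lphi by (simp add: linear_scale)
        also have "\<phi> z = c *\<^sub>R z" using z unfolding \<phi>_def by simp
        finally have "\<phi> ((1 / c) *\<^sub>R z) = z" using cne by simp
        moreover have "(1 / c) *\<^sub>R z \<in> span S'" using z by (simp add: span_scale)
        ultimately show "z \<in> \<phi> ` span S'" by (metis image_eqI)
      qed
    qed
    finally have "span ?S'' = span S \<inter> {x. \<forall>g'\<in>insert g G. h g' x = 0}" using eq by simp
    then show ?thesis using L K by blast
  qed
qed

lemma Basis_Lint: "(Basis :: rvec set) \<subseteq> Lint"
proof
  fix x :: rvec assume "x \<in> Basis"
  then obtain i where "x = axis i 1" by (auto simp: Basis_vec_def)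
  then show "x \<in> Lint" by (auto simp: Lint_def axis_def)
qed

context setting begin

lemma Np_Lint: "Np \<subseteq> Lint" using pNp by (simp add: primitive_sublattice_def sublattice_def)
lemma Nm_Lint: "Nm \<subseteq> Lint" using pNm by (simp add: primitive_sublattice_def sublattice_def)

lemma bil_int: "x \<in> Lint \<Longrightarrow> y \<in> Lint \<Longrightarrow> bil B x y \<in> \<int>"
proof -
  assume x: "x \<in> Lint" and y: "y \<in> Lint"
  have Bi: "\<forall>i j. B $ i $ j \<in> \<int>" using K3 by (simp add: K3_form_def)
  show ?thesis unfolding bil_expand
    using x y Bi by (intro Ints_sum Ints_mult) (auto simp: Lint_def)
qed

lemma Q_rational: "Q \<subseteq> span (orth_compl B Np) \<and> Q \<subseteq> span (orth_compl B Nm)"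
proof -
  obtain G where G: "G \<subseteq> Np \<union> Nm" "independent G" "Np \<union> Nm \<subseteq> span G"
    by (rule basis_exists[of "Np \<union> Nm"])
  have finG: "finite G" using G(2) by (rule finiteI_independent)
  have GL: "G \<subseteq> Lint" using G(1) Np_Lint Nm_Lint by blast
  have intG: "\<forall>g\<in>G. \<forall>x\<in>Lint. bil B x g \<in> \<int>" using bil_int GL by blast
  obtain S' where S': "S' \<subseteq> Lint" "\<forall>s\<in>S'. \<forall>g\<in>G. bil B s g = 0"
    "span S' = span Basis \<inter> {x. \<forall>g\<in>G. bil B x g = 0}"
    using rat_kernel[of G "\<lambda>g x. bil B x g" Basis, OF finG linear_bil_left intG Basis_Lint] by blast
  have QG: "Q = {x. \<forall>g\<in>G. bil B x g = 0}"
  proof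
    show "Q \<subseteq> {x. \<forall>g\<in>G. bil B x g = 0}" using G(1) by blast
    show "{x. \<forall>g\<in>G. bil B x g = 0} \<subseteq> Q"
    proof
      fix x assume x: "x \<in> {x. \<forall>g\<in>G. bil B x g = 0}"
      have "bil B x y = 0" if "y \<in> Np \<union> Nm" for y
        using bil_span_orth[of "{x}" G B x y] x that G(3) by (auto simp: span_base)
      then show "x \<in> Q" by blast
    qed
  qed
  have QS: "Q = span S'" using S'(3) QG by (simp add: span_Basis)
  have "S' \<subseteq> orth_compl B Np" "S' \<subseteq> orth_compl B Nm"
    using S'(1) S'(3) QG span_base[of _ S'] unfolding orth_compl_def by (auto simp: span_Basis)
  then show ?thesis using QS span_mono by blast
qed

end



lemma proj_exists:
  assumes "subspace (W :: rvec set)"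
  shows "\<exists>P. linear P \<and> (\<forall>x. P x \<in> W) \<and> (\<forall>w\<in>W. P w = w)"
proof -
  obtain g where "g ` UNIV \<subseteq> W" "linear g" "\<forall>v\<in>W. g (id v) = v"
    using linear_exists_left_inverse_on[of id W] assms linear_id by (auto simp: id_def)
  then show ?thesis by (intro exI[of _ g]) auto
qed

lemma continuous_on_bil:
  "continuous_on S f \<Longrightarrow> continuous_on S g \<Longrightarrow> continuous_on S (\<lambda>x. bil B (f x) (g x))"
  by (rule bounded_bilinear.continuous_on[OF bounded_bilinear_bil])

lemma cont_Phi:
  assumes c: "continuous_on S c" and f: "continuous_on S f" and g: "continuous_on S g"
    and nz: "\<And>x. x \<in> S \<Longrightarrow> bil B (g x) (g x) \<noteq> 0"
  shows "continuous_on S (\<lambda>x. Phi B (c x) (f x) (g x))"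
proof -
  have cl: "continuous_on S (\<lambda>x. lam B (f x) (g x))"
    unfolding lam_def
    by (intro continuous_on_real_sqrt continuous_on_divide continuous_on_bil f g) (use nz in auto)
  have ccof: "continuous_on S (\<lambda>x. cof (h x))" if "continuous_on S h" for h
    using linear_continuous_on[OF bounded_linear_cof] that
    by (rule continuous_on_compose2) auto
  have cci: "continuous_on S (\<lambda>x. cscale \<i> (h x))" if "continuous_on S h" for h
    using linear_continuous_on[OF bounded_linear_cscale] that
    by (rule continuous_on_compose2) auto
  let ?w = "\<lambda>x. cof (f x) + cscale \<i> (cof (lam B (f x) (g x) *\<^sub>R g x))"
  have cw: "continuous_on S ?w"
    by (intro continuous_intros ccof cci f cl g)
  have "Phi B (c x) (f x) (g x) = Re (c x) *\<^sub>R ?w x + Im (c x) *\<^sub>R cscale \<i> (?w x)" for x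
    unfolding Phi_def by (rule cscale_decomp)
  moreover have "continuous_on S (\<lambda>x. Re (c x) *\<^sub>R ?w x + Im (c x) *\<^sub>R cscale \<i> (?w x))"
    by (intro continuous_intros cci cw c)
  ultimately show ?thesis by simp
qed

lemma pc_lemma:
  assumes sym: "transpose B = B"
    and a: "a \<in> span (orth_compl B N)" and b: "b \<in> span (orth_compl B N)"
    and aa: "bil B a a > 0" and bb: "bil B b b > 0" and ab: "bil B a b = 0"
  shows "Phi B 1 a b \<in> period_cone B N"
proof -
  let ?l = "lam B a b"
  have "?l * ?l = bil B a a / bil B b b" unfolding lam_def using aa bb
    by (simp add: divide_pos_pos)
  then have "?l * (?l * bil B b b) = bil B a a" using bb by (simp add: mult.assoc[symmetric])
  then have e: "bil B (?l *\<^sub>R b) (?l *\<^sub>R b) = bil B a a" by (simp add: bil_simps)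
  have "Phi B 1 a b = cof a + cscale \<i> (cof (?l *\<^sub>R b))" by (simp add: Phi_def)
  moreover have "cof a + cscale \<i> (cof (?l *\<^sub>R b)) \<in> period_cone B N"
    by (rule period_cone_memI[OF sym a span_scale[OF b] e[symmetric] aa]) (simp add: bil_simps ab)
  ultimately show ?thesis by simp
qed

definition nrm :: "real^22^22 \<Rightarrow> rvec \<Rightarrow> real" where "nrm B x = sqrt (bil B x x)"

lemma nrm_unit: "bil B x x > 0 \<Longrightarrow> bil B ((1 / nrm B x) *\<^sub>R x) ((1 / nrm B x) *\<^sub>R x) = 1"
  unfolding nrm_def by (simp add: bil_simps power2_eq_square[symmetric])

lemma Phi_norm:
  assumes aa: "bil B a a > 0" and bb: "bil B b b > 0"
  shows "Phi B c a b = cscale (c * complex_of_real (nrm B a))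
            (cof ((1 / nrm B a) *\<^sub>R a) + cscale \<i> (cof ((1 / nrm B b) *\<^sub>R b)))"
proof -
  have na: "nrm B a > 0" and nb: "nrm B b > 0" using aa bb by (simp_all add: nrm_def)
  have l: "lam B a b = nrm B a / nrm B b" unfolding lam_def nrm_def by (simp add: real_sqrt_divide)
  have "cof a + cscale \<i> (cof (lam B a b *\<^sub>R b))
      = nrm B a *\<^sub>R (cof ((1 / nrm B a) *\<^sub>R a) + cscale \<i> (cof ((1 / nrm B b) *\<^sub>R b)))"
    using na nb unfolding l by (simp add: cof_scale cscale_scaleR scaleR_add_right)
  then have "Phi B c a b = cscale c (nrm B a *\<^sub>R (cof ((1 / nrm B a) *\<^sub>R a) + cscale \<i> (cof ((1 / nrm B b) *\<^sub>R b))))"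
    by (simp add: Phi_def)
  also have "\<dots> = cscale (c * complex_of_real (nrm B a)) (cof ((1 / nrm B a) *\<^sub>R a) + cscale \<i> (cof ((1 / nrm B b) *\<^sub>R b)))"
    by (simp add: cscale_of_real[symmetric] cscale_cscale)
  finally show ?thesis .
qed



context setting begin

lemma Wm_orth_sub: "Wm \<subseteq> span (orth_compl B Np)" by (rule span_mono) auto
lemma Wp_orth_sub: "Wp \<subseteq> span (orth_compl B Nm)" by (rule span_mono) auto

lemma amp_scale_p: "x \<in> Ampp \<Longrightarrow> t > 0 \<Longrightarrow> t *\<^sub>R x \<in> Ampp"
  using ampp unfolding amp_cone_def by blast
lemma amp_scale_m: "x \<in> Ampm \<Longrightarrow> t > 0 \<Longrightarrow> t *\<^sub>R x \<in> Ampm"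
  using ampm unfolding amp_cone_def by blast

lemma amp_open_p: "x \<in> Ampp \<Longrightarrow> \<exists>e>0. \<forall>x'\<in>span Np. dist x' x < e \<longrightarrow> x' \<in> Ampp"
proof -
  assume x: "x \<in> Ampp"
  have "openin (top_of_set (span Np)) Ampp" using ampp unfolding amp_cone_def by blast
  then show ?thesis using x unfolding openin_euclidean_subtopology_iff by blast
qed
lemma amp_open_m: "x \<in> Ampm \<Longrightarrow> \<exists>e>0. \<forall>x'\<in>span Nm. dist x' x < e \<longrightarrow> x' \<in> Ampm"
proof -
  assume x: "x \<in> Ampm"
  have "openin (top_of_set (span Nm)) Ampm" using ampm unfolding amp_cone_def by blast
  then show ?thesis using x unfolding openin_euclidean_subtopology_iff by blast
qed

lemma bsym_zero: "bil B x y = 0 \<Longrightarrow> bil B y x = 0" using bsym by metis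

end



context setting begin

lemma noopen_p:
  fixes G0 G1 :: "(complex \<times> rvec \<times> rvec \<times> rvec) set"
  assumes lPm: "linear Pm" "\<forall>x. Pm x \<in> Wm" "\<forall>w\<in>Wm. Pm w = w"
    and lPq: "linear Pq" "\<forall>x. Pq x \<in> Q" "\<forall>w\<in>Q. Pq w = w"
    and G0: "\<forall>p\<in>G0. fst p \<noteq> 0 \<and> 0 < bil B (Pq (snd (snd (snd p)))) (Pq (snd (snd (snd p))))
                \<and> 0 < bil B (Pm (fst (snd (snd p)))) (Pm (fst (snd (snd p))))"
    and d22: "d \<le> 22" and dd: "d + 1 < dim Wm + dim Q"
    and oG1: "open G1" and gG1: "g \<in> G1" and G1G0: "G1 \<subseteq> G0"
    and U: "open U" "Phi B (fst g) (Pm (fst (snd (snd g)))) (Pq (snd (snd (snd g)))) \<in> U"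
    and FD: "\<forall>z\<in>U. (F has_derivative D z) (at z) \<and> clinear (D z) \<and> dim (range (D z)) = 2 * (22 - d)"
    and zero: "\<forall>x\<in>G1. F (Phi B (fst x) (Pm (fst (snd (snd x)))) (Pq (snd (snd (snd x))))) = 0"
  shows False
proof -
  obtain c xp xm u where g: "g = (c, xp, xm, u)" by (cases g) auto
  let ?a = "Pm xm" and ?b = "Pq u"
  have gG0: "g \<in> G0" using gG1 G1G0 by blast
  have c: "c \<noteq> 0" and bb: "0 < bil B ?b ?b" and aa: "0 < bil B ?a ?a" using G0 gG0 g by auto
  have aW: "?a \<in> Wm" using lPm by blast
  have bQ: "?b \<in> Q" using lPq by blast
  have zU: "Phi B c ?a ?b \<in> U" using U(2) g by simp
  have F: "(F has_derivative D (Phi B c ?a ?b)) (at (Phi B c ?a ?b))" and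
    cl: "clinear (D (Phi B c ?a ?b))" and rk: "dim (range (D (Phi B c ?a ?b))) = 2 * (22 - d)"
    using FD zU by auto
  have Z: "eventually (\<lambda>t. F (Phi B (fst (g + t *\<^sub>R h)) (Pm (fst (snd (snd (g + t *\<^sub>R h)))))
              (Pq (snd (snd (snd (g + t *\<^sub>R h)))))) = 0) (nhds 0)" for h
    using eventually_line[OF oG1 gG1, of h] by (rule eventually_mono) (use zero in blast)
  have Z1: "eventually (\<lambda>t. F (Phi B (c + complex_of_real t) ?a ?b) = 0) (nhds 0)"
    using Z[of "(1, 0, 0, 0)"] g by (simp add: scaleR_conv_of_real)
  have Z2: "eventually (\<lambda>t. F (Phi B c (?a + t *\<^sub>R v) ?b) = 0) (nhds 0)" if v: "v \<in> Wm" "bil B ?a v = 0" for v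
  proof -
    have "Pm (xm + t *\<^sub>R v) = ?a + t *\<^sub>R v" for t using lPm v(1) by (simp add: linear_add linear_scale)
    then show ?thesis using Z[of "(0, 0, v, 0)"] g by simp
  qed
  have Z3: "eventually (\<lambda>t. F (Phi B c ?a (?b + t *\<^sub>R w)) = 0) (nhds 0)" if w: "w \<in> Q" "bil B ?b w = 0" for w
  proof -
    have "Pq (u + t *\<^sub>R w) = ?b + t *\<^sub>R w" for t using lPq w(1) by (simp add: linear_add linear_scale)
    then show ?thesis using Z[of "(0, 0, 0, w)"] g by simp
  qed
  show False
    by (rule core_contra[OF sym subspace_span subspace_Q QWm aW bQ aa bb c F cl rk d22 dd Z1 Z2 Z3])
qed

lemma noopen_m:
  fixes G0 G1 :: "(complex \<times> rvec \<times> rvec \<times> rvec) set"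
  assumes lPp: "linear Pp" "\<forall>x. Pp x \<in> Wp" "\<forall>w\<in>Wp. Pp w = w"
    and lPq: "linear Pq" "\<forall>x. Pq x \<in> Q" "\<forall>w\<in>Q. Pq w = w"
    and G0: "\<forall>p\<in>G0. fst p \<noteq> 0 \<and> 0 < bil B (Pq (snd (snd (snd p)))) (Pq (snd (snd (snd p))))
                \<and> 0 < bil B (Pp (fst (snd p))) (Pp (fst (snd p)))"
    and d22: "d \<le> 22" and dd: "d + 1 < dim Wp + dim Q"
    and oG1: "open G1" and gG1: "g \<in> G1" and G1G0: "G1 \<subseteq> G0"
    and U: "open U" "Phi B (fst g) (Pp (fst (snd g))) (- Pq (snd (snd (snd g)))) \<in> U"
    and FD: "\<forall>z\<in>U. (F has_derivative D z) (at z) \<and> clinear (D z) \<and> dim (range (D z)) = 2 * (22 - d)"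
    and zero: "\<forall>x\<in>G1. F (Phi B (fst x) (Pp (fst (snd x))) (- Pq (snd (snd (snd x))))) = 0"
  shows False
proof -
  obtain c xp xm u where g: "g = (c, xp, xm, u)" by (cases g) auto
  let ?a = "Pp xp" and ?b = "- Pq u"
  have gG0: "g \<in> G0" using gG1 G1G0 by blast
  have c: "c \<noteq> 0" and bb': "0 < bil B (Pq u) (Pq u)" and aa: "0 < bil B ?a ?a" using G0 gG0 g by auto
  have bb: "0 < bil B ?b ?b" using bb' by (simp add: bil_simps)
  have aW: "?a \<in> Wp" using lPp by blast
  have bQ: "?b \<in> Q" using lPq subspace_Q subspace_neg by blast
  have zU: "Phi B c ?a ?b \<in> U" using U(2) g by simp
  have F: "(F has_derivative D (Phi B c ?a ?b)) (at (Phi B c ?a ?b))" and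
    cl: "clinear (D (Phi B c ?a ?b))" and rk: "dim (range (D (Phi B c ?a ?b))) = 2 * (22 - d)"
    using FD zU by auto
  have Z: "eventually (\<lambda>t. F (Phi B (fst (g + t *\<^sub>R h)) (Pp (fst (snd (g + t *\<^sub>R h))))
              (- Pq (snd (snd (snd (g + t *\<^sub>R h)))))) = 0) (nhds 0)" for h
    using eventually_line[OF oG1 gG1, of h] by (rule eventually_mono) (use zero in blast)
  have Z1: "eventually (\<lambda>t. F (Phi B (c + complex_of_real t) ?a ?b) = 0) (nhds 0)"
    using Z[of "(1, 0, 0, 0)"] g by (simp add: scaleR_conv_of_real)
  have Z2: "eventually (\<lambda>t. F (Phi B c (?a + t *\<^sub>R v) ?b) = 0) (nhds 0)" if v: "v \<in> Wp" "bil B ?a v = 0" for v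
  proof -
    have "Pp (xp + t *\<^sub>R v) = ?a + t *\<^sub>R v" for t using lPp v(1) by (simp add: linear_add linear_scale)
    then show ?thesis using Z[of "(0, v, 0, 0)"] g by simp
  qed
  have Z3: "eventually (\<lambda>t. F (Phi B c ?a (?b + t *\<^sub>R w)) = 0) (nhds 0)" if w: "w \<in> Q" "bil B ?b w = 0" for w
  proof -
    have "- Pq (u + t *\<^sub>R (- w)) = ?b + t *\<^sub>R w" for t using lPq w(1) by (simp add: linear_add linear_scale linear_diff)
    then show ?thesis using Z[of "(0, 0, 0, - w)"] g by simp
  qed
  show False
    by (rule core_contra[OF sym subspace_span subspace_Q QWp aW bQ aa bb c F cl rk d22 dd Z1 Z2 Z3])
qed

end



context setting begin

lemma main:
  fixes Realp Realm :: "cvec set \<Rightarrow> rvec \<Rightarrow> bool"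
  assumes gp: "generic_family B Np Ampp Realp" and gm: "generic_family B Nm Ampm Realm"
  shows "\<exists>kp km k0.
     bil B kp kp = 1 \<and> bil B km km = 1 \<and> bil B k0 k0 = 1 \<and>
     bil B kp km = 0 \<and> bil B kp k0 = 0 \<and> bil B km k0 = 0 \<and>
     kp \<in> Ampp \<and> km \<in> Ampm \<and>
     Realp (cline (cof km + cscale \<i> (cof k0))) kp \<and>
     Realm (cline (cof kp - cscale \<i> (cof k0))) km"
proof -
  obtain ap where ap: "ap \<in> Wp" "ap \<in> Ampp" using Ap by (meson IntE ex_in_conv)
  obtain am where am: "am \<in> Wm" "am \<in> Ampm" using Am by (meson IntE ex_in_conv)
  obtain b0 where b0: "b0 \<in> Q" "bil B b0 b0 > 0" using pos_in_Q by blast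
  have apos: "bil B ap ap > 0" using amp_pos_p ap(2) .
  have ampos: "bil B am am > 0" using amp_pos_m am(2) .
  obtain Pp where Pp: "linear Pp" "\<forall>x. Pp x \<in> Wp" "\<forall>w\<in>Wp. Pp w = w"
    using proj_exists[OF subspace_span] by blast
  obtain Pm where Pm: "linear Pm" "\<forall>x. Pm x \<in> Wm" "\<forall>w\<in>Wm. Pm w = w"
    using proj_exists[OF subspace_span] by blast
  obtain Pq where Pq: "linear Pq" "\<forall>x. Pq x \<in> Q" "\<forall>w\<in>Q. Pq w = w"
    using proj_exists[OF subspace_Q] by blast
  obtain Up Fp where Up: "Up \<subseteq> griffiths_domain B Np" "griffiths_domain B Np - Up = \<Union>Fp"
    "locally_finite_in_D B Np Fp" "\<forall>S\<in>Fp. analytic_subm_poscodim B Np S" "\<forall>P\<in>Up. \<forall>k\<in>Ampp. Realp P k"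
    using gp unfolding generic_family_def by blast
  obtain Um Fm where Um: "Um \<subseteq> griffiths_domain B Nm" "griffiths_domain B Nm - Um = \<Union>Fm"
    "locally_finite_in_D B Nm Fm" "\<forall>S\<in>Fm. analytic_subm_poscodim B Nm S" "\<forall>P\<in>Um. \<forall>k\<in>Ampm. Realm P k"
    using gm unfolding generic_family_def by blast
  have QR: "Q \<subseteq> span (orth_compl B Np)" "Q \<subseteq> span (orth_compl B Nm)" using Q_rational by auto
  have amNm: "am \<in> span Nm" using am(1) Wm_sub by blast
  have apNp: "ap \<in> span Np" using ap(1) Wp_sub by blast
  have amb0: "bil B am b0 = 0" using bsym_zero[OF Q_orth_m[OF b0(1) amNm]] .
  have apb0: "bil B ap b0 = 0" using bsym_zero[OF Q_orth_p[OF b0(1) apNp]] .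
  have w0p: "Phi B 1 am b0 \<in> period_cone B Np"
    by (rule pc_lemma[OF sym _ _ ampos b0(2) amb0]) (use am(1) Wm_orth_sub b0(1) QR in blast)+
  have nb0: "- b0 \<in> span (orth_compl B Nm)" using b0(1) QR(2) span_neg by blast
  have w0m: "Phi B 1 ap (- b0) \<in> period_cone B Nm"
    by (rule pc_lemma[OF sym _ nb0 apos]) (use ap(1) Wp_orth_sub b0 apb0 in \<open>auto simp: bil_simps\<close>)
  obtain Vp where Vp: "open Vp" "Phi B 1 am b0 \<in> Vp" "finite {S\<in>Fp. \<Union>S \<inter> Vp \<noteq> {}}"
    using Up(3) w0p unfolding locally_finite_in_D_def by blast
  obtain Vm where Vm: "open Vm" "Phi B 1 ap (- b0) \<in> Vm" "finite {S\<in>Fm. \<Union>S \<inter> Vm \<noteq> {}}"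
    using Um(3) w0m unfolding locally_finite_in_D_def by blast
  obtain ep where ep: "ep > 0" "\<forall>x'\<in>span Np. dist x' ap < ep \<longrightarrow> x' \<in> Ampp"
    using amp_open_p[OF ap(2)] by blast
  obtain em where em: "em > 0" "\<forall>x'\<in>span Nm. dist x' am < em \<longrightarrow> x' \<in> Ampm"
    using amp_open_m[OF am(2)] by blast
  define cc where "cc p = fst p" for p :: "complex \<times> rvec \<times> rvec \<times> rvec"
  define Xp where "Xp p = Pp (fst (snd p))" for p :: "complex \<times> rvec \<times> rvec \<times> rvec"
  define Xm where "Xm p = Pm (fst (snd (snd p)))" for p :: "complex \<times> rvec \<times> rvec \<times> rvec"
  define Bq where "Bq p = Pq (snd (snd (snd p)))" for p :: "complex \<times> rvec \<times> rvec \<times> rvec"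
  define Phip where "Phip p = Phi B (cc p) (Xm p) (Bq p)" for p
  define Phim where "Phim p = Phi B (cc p) (Xp p) (- Bq p)" for p
  have cPp: "continuous_on UNIV Pp" using Pp(1) linear_continuous_on linear_conv_bounded_linear by blast
  have cPm: "continuous_on UNIV Pm" using Pm(1) linear_continuous_on linear_conv_bounded_linear by blast
  have cPq: "continuous_on UNIV Pq" using Pq(1) linear_continuous_on linear_conv_bounded_linear by blast
  have ccc: "continuous_on S cc" for S unfolding cc_def[abs_def] by (intro continuous_intros)
  have cXp: "continuous_on S Xp" for S unfolding Xp_def[abs_def]
    by (rule continuous_on_compose2[OF cPp]) (intro continuous_intros, simp)
  have cXm: "continuous_on S Xm" for S unfolding Xm_def[abs_def]
    by (rule continuous_on_compose2[OF cPm]) (intro continuous_intros, simp)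
  have cBq: "continuous_on S Bq" for S unfolding Bq_def[abs_def]
    by (rule continuous_on_compose2[OF cPq]) (intro continuous_intros, simp)
  define Oo where "Oo = {p. cc p \<noteq> 0} \<inter> {p. 0 < bil B (Bq p) (Bq p)} \<inter> {p. 0 < bil B (Xm p) (Xm p)}
      \<inter> {p. 0 < bil B (Xp p) (Xp p)}"
  have oOo: "open Oo" unfolding Oo_def
    by (intro open_Int open_Collect_neq open_Collect_less continuous_on_bil ccc cXm cXp cBq continuous_on_const)
  have cPhip: "continuous_on Oo Phip" unfolding Phip_def[abs_def]
    by (rule cont_Phi[OF ccc cXm cBq]) (auto simp: Oo_def)
  have cPhim: "continuous_on Oo Phim" unfolding Phim_def[abs_def]
    by (rule cont_Phi[OF ccc cXp continuous_on_minus[OF cBq]]) (auto simp: Oo_def bil_simps)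
  define G0 where "G0 = (Oo \<inter> Phip -` Vp) \<inter> (Oo \<inter> Phim -` Vm) \<inter> (UNIV \<inter> Xm -` ball am em) \<inter> (UNIV \<inter> Xp -` ball ap ep)"
  have oG0: "open G0" unfolding G0_def
    by (intro open_Int continuous_open_preimage[OF cPhip oOo Vp(1)] continuous_open_preimage[OF cPhim oOo Vm(1)]
        continuous_open_preimage[OF cXm open_UNIV open_ball] continuous_open_preimage[OF cXp open_UNIV open_ball])
  have G0Oo: "G0 \<subseteq> Oo" unfolding G0_def by blast
  define g0 where "g0 = ((1::complex), ap, am, b0)"
  have g0vals: "cc g0 = 1" "Xp g0 = ap" "Xm g0 = am" "Bq g0 = b0"
    unfolding g0_def cc_def Xp_def Xm_def Bq_def using Pp(3) Pm(3) Pq(3) ap(1) am(1) b0(1) by auto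
  have g0G0: "g0 \<in> G0"
    unfolding G0_def Oo_def Phip_def Phim_def using g0vals apos ampos b0(2) Vp(2) Vm(2) ep(1) em(1) by simp
  have G0prop: "\<forall>p\<in>G0. fst p \<noteq> 0 \<and> 0 < bil B (Pq (snd (snd (snd p)))) (Pq (snd (snd (snd p))))
                \<and> 0 < bil B (Pm (fst (snd (snd p)))) (Pm (fst (snd (snd p))))"
    using G0Oo unfolding Oo_def cc_def Bq_def Xm_def by blast
  have G0prop': "\<forall>p\<in>G0. fst p \<noteq> 0 \<and> 0 < bil B (Pq (snd (snd (snd p)))) (Pq (snd (snd (snd p))))
                \<and> 0 < bil B (Pp (fst (snd p))) (Pp (fst (snd p)))"
    using G0Oo unfolding Oo_def cc_def Bq_def Xp_def by blast
  define Jp where "Jp = {S\<in>Fp. \<Union>S \<inter> Vp \<noteq> {}}"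
  define Jm where "Jm = {S\<in>Fm. \<Union>S \<inter> Vm \<noteq> {}}"
  define J where "J = Inl ` Jp \<union> Inr ` Jm"
  define Bad where "Bad j = (case j of Inl S \<Rightarrow> {p. Phip p \<in> \<Union>S - {0}} | Inr S \<Rightarrow> {p. Phim p \<in> \<Union>S - {0}})" for j
  have finJ: "finite J" unfolding J_def Jp_def Jm_def using Vp(3) Vm(3) by simp
  have step: "\<exists>G'. open G' \<and> G' \<noteq> {} \<and> G' \<subseteq> G \<and> (\<forall>x\<in>G'. x \<notin> Bad j)"
    if j: "j \<in> J" and G: "open G" "G \<noteq> {}" "G \<subseteq> G0" for j G
  proof (cases j)
    case (Inl S)
    then have S: "S \<in> Fp" using j unfolding J_def Jp_def by auto
    obtain d where d: "csubmanifold (\<Union>S - {0}) d" "d < dim (span (orth_compl B Np)) - 1"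
      using Up(4) S unfolding analytic_subm_poscodim_def by blast
    have d22: "d \<le> 22" using d(1) unfolding csubmanifold_def by blast
    have dd: "d + 1 < dim Wm + dim Q" using d(2) dim_orth_p by linarith
    have "\<exists>G'. open G' \<and> G' \<noteq> {} \<and> G' \<subseteq> G \<and> (\<forall>x\<in>G'. Phip x \<notin> \<Union>S - {0})"
    proof (rule avoid_one[OF continuous_on_subset[OF cPhip G0Oo] oG0 d(1) _ G])
      fix G1 g U F D
      assume h: "open G1" "g \<in> G1" "G1 \<subseteq> G0" "open U" "Phip g \<in> U"
        "\<forall>z\<in>U. (F has_derivative D z) (at z) \<and> clinear (D z) \<and> dim (range (D z)) = 2 * (22 - d)"
        "\<forall>x\<in>G1. F (Phip x) = 0"
      show False
        by (rule noopen_p[OF Pm Pq G0prop d22 dd h(1-4)])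
           (use h(5-7) in \<open>simp_all add: Phip_def cc_def Xm_def Bq_def\<close>)
    qed
    then show ?thesis unfolding Bad_def Inl by simp
  next
    case (Inr S)
    then have S: "S \<in> Fm" using j unfolding J_def Jm_def by auto
    obtain d where d: "csubmanifold (\<Union>S - {0}) d" "d < dim (span (orth_compl B Nm)) - 1"
      using Um(4) S unfolding analytic_subm_poscodim_def by blast
    have d22: "d \<le> 22" using d(1) unfolding csubmanifold_def by blast
    have dd: "d + 1 < dim Wp + dim Q" using d(2) dim_orth_m by linarith
    have "\<exists>G'. open G' \<and> G' \<noteq> {} \<and> G' \<subseteq> G \<and> (\<forall>x\<in>G'. Phim x \<notin> \<Union>S - {0})"
    proof (rule avoid_one[OF continuous_on_subset[OF cPhim G0Oo] oG0 d(1) _ G])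
      fix G1 g U F D
      assume h: "open G1" "g \<in> G1" "G1 \<subseteq> G0" "open U" "Phim g \<in> U"
        "\<forall>z\<in>U. (F has_derivative D z) (at z) \<and> clinear (D z) \<and> dim (range (D z)) = 2 * (22 - d)"
        "\<forall>x\<in>G1. F (Phim x) = 0"
      show False
        by (rule noopen_m[OF Pp Pq G0prop' d22 dd h(1-4)])
           (use h(5-7) in \<open>simp_all add: Phim_def cc_def Xp_def Bq_def\<close>)
    qed
    then show ?thesis unfolding Bad_def Inr by simp
  qed
  have G0ne: "G0 \<noteq> {}" using g0G0 by blast
  have "\<exists>x\<in>G0. \<forall>j\<in>J. x \<notin> Bad j" by (rule avoid_finite[OF finJ step oG0 G0ne])
  then obtain p where p: "p \<in> G0" "\<forall>j\<in>J. p \<notin> Bad j" by blast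
  define c where "c = cc p"
  define a where "a = Xm p"
  define a' where "a' = Xp p"
  define b where "b = Bq p"
  have pOo: "p \<in> Oo" using p(1) G0Oo by blast
  have c0: "c \<noteq> 0" and bpos: "0 < bil B b b" and apos': "0 < bil B a a" and a'pos: "0 < bil B a' a'"
    using pOo unfolding Oo_def c_def a_def a'_def b_def by simp_all
  have aW: "a \<in> Wm" unfolding a_def Xm_def using Pm(2) by blast
  have a'W: "a' \<in> Wp" unfolding a'_def Xp_def using Pp(2) by blast
  have bQ: "b \<in> Q" unfolding b_def Bq_def using Pq(2) by blast
  have aball: "dist am a < em" and a'ball: "dist ap a' < ep"
    using p(1) unfolding G0_def a_def a'_def by auto
  have aAmp: "a \<in> Ampm" using em(2) aball Wm_sub aW by (auto simp: dist_commute)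
  have a'Amp: "a' \<in> Ampp" using ep(2) a'ball Wp_sub a'W by (auto simp: dist_commute)
  define km where "km = (1 / nrm B a) *\<^sub>R a"
  define kp where "kp = (1 / nrm B a') *\<^sub>R a'"
  define k0 where "k0 = (1 / nrm B b) *\<^sub>R b"
  have na: "nrm B a > 0" and na': "nrm B a' > 0" and nb: "nrm B b > 0"
    using apos' a'pos bpos by (simp_all add: nrm_def)
  have u1: "bil B kp kp = 1" "bil B km km = 1" "bil B k0 k0 = 1"
    unfolding kp_def km_def k0_def using nrm_unit apos' a'pos bpos by auto
  have kmW: "km \<in> Wm" unfolding km_def using aW by (rule span_scale)
  have kpW: "kp \<in> Wp" unfolding kp_def using a'W by (rule span_scale)
  have k0Q: "k0 \<in> Q" unfolding k0_def using bQ subspace_Q subspace_scale by blast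
  have kmNm: "km \<in> span Nm" using kmW Wm_sub by blast
  have kpNp: "kp \<in> span Np" using kpW Wp_sub by blast
  have o1: "bil B kp km = 0" using Wp_orth[OF kpW kmNm] .
  have o2: "bil B kp k0 = 0" using bsym_zero[OF Q_orth_p[OF k0Q kpNp]] .
  have o3: "bil B km k0 = 0" using bsym_zero[OF Q_orth_m[OF k0Q kmNm]] .
  have kpA: "kp \<in> Ampp" unfolding kp_def using amp_scale_p[OF a'Amp] na' by simp
  have kmA: "km \<in> Ampm" unfolding km_def using amp_scale_m[OF aAmp] na by simp
  let ?wp = "cof km + cscale \<i> (cof k0)"
  have wpP: "?wp \<in> period_cone B Np"
  proof (rule period_cone_memI[OF sym _ _ _ _ o3])
    show "km \<in> span (orth_compl B Np)" using kmW Wm_orth_sub by blast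
    show "k0 \<in> span (orth_compl B Np)" using k0Q QR(1) by blast
    show "bil B km km = bil B k0 k0" using u1 by simp
    show "0 < bil B km km" using u1 by simp
  qed
  have Phip_eq: "Phip p = cscale (c * complex_of_real (nrm B a)) ?wp"
    unfolding Phip_def km_def k0_def c_def a_def b_def using Phi_norm[OF apos' bpos] unfolding a_def b_def by simp
  have Realp1: "Realp (cline ?wp) kp"
  proof -
    have gd: "cline ?wp \<in> griffiths_domain B Np" unfolding griffiths_domain_def using wpP by blast
    have "cline ?wp \<in> Up"
    proof (rule ccontr)
      assume "cline ?wp \<notin> Up"
      then have "cline ?wp \<in> \<Union>Fp" using gd Up(2) by blast
      then obtain S where S: "S \<in> Fp" "cline ?wp \<in> S" by blast
      have inl: "Phip p \<in> cline ?wp" unfolding Phip_eq cline_def by blast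
      then have inS: "Phip p \<in> \<Union>S" using S(2) by blast
      have wp0: "?wp \<noteq> 0" using wpP unfolding period_cone_def by blast
      have ne0: "c * complex_of_real (nrm B a) \<noteq> 0" using c0 na by simp
      have "Phip p \<noteq> 0" unfolding Phip_eq using cscale_eq_0[OF ne0] wp0 by simp
      moreover have "Phip p \<in> Vp" using p(1) unfolding G0_def by blast
      ultimately have "S \<in> Jp" unfolding Jp_def using S(1) inS by blast
      then have "Inl S \<in> J" unfolding J_def by blast
      then have "p \<notin> Bad (Inl S)" using p(2) by blast
      then show False unfolding Bad_def using inS \<open>Phip p \<noteq> 0\<close> by simp
    qed
    then show ?thesis using Up(5) kpA by blast
  qed
  let ?wm = "cof kp + cscale \<i> (cof ((1 / nrm B (- b)) *\<^sub>R (- b)))"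
  have nrm_neg: "nrm B (- b) = nrm B b" by (simp add: nrm_def bil_simps)
  have wm_eq: "?wm = cof kp - cscale \<i> (cof k0)"
    unfolding k0_def nrm_neg by (simp add: cof_minus cscale_minus)
  have nbpos: "0 < bil B (- b) (- b)" using bpos by (simp add: bil_simps)
  have k0'eq: "(1 / nrm B (- b)) *\<^sub>R (- b) = - k0" unfolding k0_def nrm_neg by simp
  have k0'Q: "(1 / nrm B (- b)) *\<^sub>R (- b) \<in> Q" unfolding k0'eq by (rule subspace_neg[OF subspace_Q k0Q])
  have u2: "bil B ((1 / nrm B (- b)) *\<^sub>R (- b)) ((1 / nrm B (- b)) *\<^sub>R (- b)) = 1"
    by (rule nrm_unit[OF nbpos])
  have o4: "bil B kp ((1 / nrm B (- b)) *\<^sub>R (- b)) = 0" using bsym_zero[OF Q_orth_p[OF k0'Q kpNp]] .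
  have wmP: "?wm \<in> period_cone B Nm"
  proof (rule period_cone_memI[OF sym _ _ _ _ o4])
    show "kp \<in> span (orth_compl B Nm)" using kpW Wp_orth_sub by blast
    show "(1 / nrm B (- b)) *\<^sub>R (- b) \<in> span (orth_compl B Nm)" using k0'Q QR(2) by blast
    show "bil B kp kp = bil B ((1 / nrm B (- b)) *\<^sub>R (- b)) ((1 / nrm B (- b)) *\<^sub>R (- b))"
      using u1(1) u2 by simp
    show "0 < bil B kp kp" using u1(1) by simp
  qed
  have Phim_eq: "Phim p = cscale (c * complex_of_real (nrm B a')) ?wm"
    unfolding Phim_def kp_def c_def a'_def b_def using Phi_norm[OF a'pos nbpos] unfolding a'_def b_def by simp
  have Realm1: "Realm (cline ?wm) km"
  proof -
    have gd: "cline ?wm \<in> griffiths_domain B Nm" unfolding griffiths_domain_def using wmP by blast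
    have "cline ?wm \<in> Um"
    proof (rule ccontr)
      assume "cline ?wm \<notin> Um"
      then have "cline ?wm \<in> \<Union>Fm" using gd Um(2) by blast
      then obtain S where S: "S \<in> Fm" "cline ?wm \<in> S" by blast
      have inl: "Phim p \<in> cline ?wm" unfolding Phim_eq cline_def by blast
      then have inS: "Phim p \<in> \<Union>S" using S(2) by blast
      have wm0: "?wm \<noteq> 0" using wmP unfolding period_cone_def by blast
      have ne0: "c * complex_of_real (nrm B a') \<noteq> 0" using c0 na' by simp
      have "Phim p \<noteq> 0" unfolding Phim_eq using cscale_eq_0[OF ne0] wm0 by simp
      moreover have "Phim p \<in> Vm" using p(1) unfolding G0_def by blast
      ultimately have "S \<in> Jm" unfolding Jm_def using S(1) inS by blast
      then have "Inr S \<in> J" unfolding J_def by blast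
      then have "p \<notin> Bad (Inr S)" using p(2) by blast
      then show False unfolding Bad_def using inS \<open>Phim p \<noteq> 0\<close> by simp
    qed
    then show ?thesis using Um(5) kmA by blast
  qed
  have "Realm (cline (cof kp - cscale \<i> (cof k0))) km" using Realm1 wm_eq by simp
  then show ?thesis using u1 o1 o2 o3 kpA kmA Realp1 by blast
qed

end


theorem proposition6p18:
  fixes B :: "real^22^22" and Np Nm Ampp Ampm :: "rvec set" and rp rm :: nat
    and Realp Realm :: "cvec set \<Rightarrow> rvec \<Rightarrow> bool"
  assumes "K3_form B"
    and "primitive_sublattice Np" and "primitive_sublattice Nm"
    and "rp \<ge> 1" and "rm \<ge> 1"
    and "form_signature B (span Np) 1 (rp - 1)"
    and "form_signature B (span Nm) 1 (rm - 1)"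
    and "amp_cone B Np Ampp" and "amp_cone B Nm Ampm"
    and "generic_family B Np Ampp Realp"
    and "generic_family B Nm Ampm Realm"
    and "neg_def_on B (span (Np \<inter> Nm))"
    and "span Np = {x + y | x y. x \<in> span (Np \<inter> Nm) \<and> y \<in> span (orth_compl B Nm \<inter> Np)}"
    and "span (Np \<inter> Nm) \<inter> span (orth_compl B Nm \<inter> Np) = {0}"
    and "span Nm = {x + y | x y. x \<in> span (Np \<inter> Nm) \<and> y \<in> span (orth_compl B Np \<inter> Nm)}"
    and "span (Np \<inter> Nm) \<inter> span (orth_compl B Np \<inter> Nm) = {0}"
    and "span (orth_compl B Nm \<inter> Np) \<inter> Ampp \<noteq> {}"
    and "span (orth_compl B Np \<inter> Nm) \<inter> Ampm \<noteq> {}"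
  shows "\<exists>kp km k0.
     bil B kp kp = 1 \<and> bil B km km = 1 \<and> bil B k0 k0 = 1 \<and>
     bil B kp km = 0 \<and> bil B kp k0 = 0 \<and> bil B km k0 = 0 \<and>
     kp \<in> Ampp \<and> km \<in> Ampm \<and>
     Realp (cline (cof km + cscale \<i> (cof k0))) kp \<and>
     Realm (cline (cof kp - cscale \<i> (cof k0))) km"
proof -
  interpret setting B Np Nm Ampp Ampm rp rm
    by (rule setting.intro[OF assms(1) assms(2) assms(3) assms(6) assms(7) assms(8) assms(9)
          assms(12) assms(13) assms(14) assms(15) assms(16) assms(17) assms(18)])
  show ?thesis by (rule main[OF assms(10) assms(11)])
qed

end
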